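(* Let $d\ge2$ and $i\in\{0,\dots,d-1\}$. Let $(X,\omega)=\#^d_{t_h+it_v}\mathbb{T}^2$ be a $d$-symmetric differential with twist coordinate $[t_h+it_v]\in\mathbb{T}^2_d$. If $(X,\omega)\in\mathscr{C}_{v,i}$, then the vertical foliation of $(X,\omega)$ contains $(i,d)$ maximal cylinders of width $\frac{d}{(i,d)}$ and $(i+1,d)$ maximal cylinders of width $\frac{d}{(i+1,d)}$. If $(X,\omega)$ lies on the boundary leaf $\partial\mathscr{C}_{v,i}=\{t_h\equiv i\bmod d\}$, its vertical foliation contains $(i,d)$ cylinders of width $\frac{d}{(i,d)}$.
   Context: $(a,d)=\gcd(a,d)$ with $(0,d)=d$. $\mathbb{T}^2=\mathbb{C}/(\mathbb{Z}\oplus\mathbb{Z}i)$, $\mathbb{T}^2_d=\mathbb{C}/d(\mathbb{Z}\oplus\mathbb{Z}i)$. $\#^d_v\mathbb{T}^2$ is obtained by taking $d$ copies of $\mathbb{T}^2$, slitting each along the image of $[0,v]$ and gluing one side of the slit on copy $j$ to the opposite side on copy $j+1\bmod d$ (by limits for non-injective segments); $t_h+it_v\mapsto\#^d_{t_h+it_v}\mathbb{T}^2$ gives twist coordinates on $\mathbb{T}^2_d$, which parametrizes the modular fiber $\mathscr{F}^{sym}_d$. The vertical foliation of $\mathbb{T}^2_d$ consists of the $d$ open cylinders $\mathscr{C}_{v,i}=\{[t_h+it_v]:\lfloor t_h\rfloor\equiv i\bmod d,\ t_h\notin\mathbb{Z}\}$, each of width $d$ and height $1$, separated by the vertical leaves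 $\{t_h\equiv i\bmod d\}$. *)

theory Defs
  imports "HOL-Analysis.Analysis"
begin

text \<open>
Concrete model of the d-symmetric differential obtained by the slit construction.
A point of the surface is represented by a pair (z, j): z a complex number
(representing its class in the torus C/(Z + Z i)) and j an integer (the sheet, taken mod d).
Points lying on the slit are attached to one fixed side of the slit (the side reached by the
principal branch of Arg).  The images of the slit endpoints 0 and v are the singular
(marked) points.
\<close>

definition Lat :: "complex set" where
  "Lat = {of_int a + of_int b * \<i> | a b. True}"

definition sing :: "complex \<Rightarrow> complex set" where
  "sing v = {z. z \<in> Lat \<or> z - v \<in> Lat}"

text \<open>Signed number of crossings of the straight segment from z to w with the
  translated slit l + [0, v]: continuous change of the argument of (x - l - v)/(x - l)
  along the segment, minus the change of its principal value, divided by 2 pi.\<close>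
definition cross :: "complex \<Rightarrow> complex \<Rightarrow> complex \<Rightarrow> complex \<Rightarrow> int" where
  "cross v l z w = round ((Arg ((w - l - v) / (z - l - v)) - Arg ((w - l) / (z - l))
      - Arg ((w - l - v) / (w - l)) + Arg ((z - l - v) / (z - l))) / (2 * pi))"

definition shift :: "complex \<Rightarrow> complex \<Rightarrow> complex \<Rightarrow> int" where
  "shift v z w = - (\<Sum>l\<in>{l \<in> Lat. cross v l z w \<noteq> 0}. cross v l z w)"

type_synonym pt = "complex \<times> int"

definition same :: "nat \<Rightarrow> pt \<Rightarrow> pt \<Rightarrow> bool" where
  "same d p q \<longleftrightarrow> fst q - fst p \<in> Lat \<and> snd p mod int d = snd q mod int d"

definition vflow :: "complex \<Rightarrow> pt \<Rightarrow> real \<Rightarrow> pt" where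
  "vflow v p t = (fst p + \<i> * of_real t, snd p + shift v (fst p) (fst p + \<i> * of_real t))"

definition hflow :: "complex \<Rightarrow> pt \<Rightarrow> real \<Rightarrow> pt" where
  "hflow v p s = (fst p + of_real s, snd p + shift v (fst p) (fst p + of_real s))"

definition vperiods :: "complex \<Rightarrow> nat \<Rightarrow> pt \<Rightarrow> real set" where
  "vperiods v d p = {T. T > 0 \<and> closed_segment (fst p) (fst p + \<i> * of_real T) \<inter> sing v = {}
                       \<and> same d (vflow v p T) p}"

definition vperiod :: "complex \<Rightarrow> nat \<Rightarrow> pt \<Rightarrow> real" where
  "vperiod v d p = Inf (vperiods v d p)"

definition regset :: "complex \<Rightarrow> nat \<Rightarrow> pt set" where
  "regset v d = {p. vperiods v d p \<noteq> {}}"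

text \<open>Two regular points lie in the same maximal vertical cylinder iff one is reached from
  the other by a horizontal move staying inside the regular set followed by a vertical move.\<close>
definition cyl_rel :: "complex \<Rightarrow> nat \<Rightarrow> (pt \<times> pt) set" where
  "cyl_rel v d = {(p, q). p \<in> regset v d \<and> q \<in> regset v d \<and>
     (\<exists>s t. t \<ge> 0 \<and>
        closed_segment (fst p) (fst p + of_real s) \<inter> sing v = {} \<and>
        (\<forall>r \<in> {min 0 s..max 0 s}. hflow v p r \<in> regset v d) \<and>
        closed_segment (fst (hflow v p s)) (fst (hflow v p s) + \<i> * of_real t) \<inter> sing v = {} \<and>
        same d q (vflow v (hflow v p s) t))}"

text \<open>Maximal cylinders of the vertical foliation of #^d_v T^2, and their widths
  (circumference = length of the closed core leaves).\<close>
definition cylinders :: "complex \<Rightarrow> nat \<Rightarrow> pt set set" where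
  "cylinders v d = regset v d // cyl_rel v d"

definition cyl_width :: "complex \<Rightarrow> nat \<Rightarrow> pt set \<Rightarrow> real" where
  "cyl_width v d C = vperiod v d (SOME p. p \<in> C)"

definition in_open_cyl :: "nat \<Rightarrow> nat \<Rightarrow> real \<Rightarrow> bool" where
  "in_open_cyl d i th \<longleftrightarrow> \<lfloor>th\<rfloor> mod int d = int i \<and> th \<notin> \<int>"

definition on_boundary_leaf :: "nat \<Rightarrow> nat \<Rightarrow> real \<Rightarrow> bool" where
  "on_boundary_leaf d i th \<longleftrightarrow> (\<exists>k::int. th = real i + of_int k * real d)"

end

theory Submission
  imports Defs
begin


lemma Arg_div_eq:
  assumes "z \<noteq> 0" "w \<noteq> 0" "-pi < Arg z - Arg w" "Arg z - Arg w \<le> pi"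
  shows "Arg (z / w) = Arg z - Arg w"
proof -
  have "is_Arg (z/w) (Arg z - Arg w)" using Arg_divide assms by blast
  moreover have "is_Arg (z/w) (Arg (z/w))" using assms by (simp add: is_Arg_Arg)
  ultimately show ?thesis using Arg_unique_lemma[of "z/w"] assms mpi_less_Arg Arg_le_pi
    by (metis divide_eq_0_iff)
qed

lemma is_Arg_mult:
  assumes "is_Arg z r" "is_Arg w s" shows "is_Arg (z*w) (r+s)"
proof -
  have "z*w = (of_real(norm z) * exp(\<i> * of_real r)) * (of_real(norm w)*exp(\<i> * of_real s))"
    using assms unfolding is_Arg_def by metis
  also have "\<dots> = of_real(norm z * norm w) * exp(\<i> * of_real (r+s))"
    by (simp add: exp_add distrib_left)
  finally show ?thesis unfolding is_Arg_def by (simp add: norm_mult)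
qed

lemma is_Arg_diff_int:
  assumes "is_Arg z r" "is_Arg z s" "z \<noteq> 0"
  shows "\<exists>k::int. r = s + 2 * pi * k"
proof -
  have "of_real (norm z) * exp (\<i> * of_real r) = of_real (norm z) * exp (\<i> * of_real s)"
    using assms unfolding is_Arg_def by metis
  hence "exp (\<i> * of_real r) = exp (\<i> * of_real s)" using assms by simp
  then obtain n::int where "\<i> * of_real r = \<i> * of_real s + (of_int (2 * n) * pi) * \<i>"
    using exp_eq by blast
  hence "complex_of_real r = complex_of_real (s + 2*pi*n)" 
  proof -
    assume h: "\<i> * of_real r = \<i> * of_real s + (of_int (2 * n) * pi) * \<i>"
    have "\<i> * of_real r = \<i> * complex_of_real (s + 2*pi*n)" using h by (simp add: algebra_simps)
    thus ?thesis by simp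
  qed
  hence "r = s + 2*pi*n" using of_real_eq_iff by blast
  thus ?thesis by blast
qed

lemma Arg_Re_pos_div:
  assumes "Re z > 0" "Re w > 0"
  shows "Arg (z / w) = Arg z - Arg w"
proof -
  have "\<bar>Arg z\<bar> < pi/2" "\<bar>Arg w\<bar> < pi/2" using assms Arg_Re_pos by auto
  moreover have "z \<noteq> 0" "w \<noteq> 0" using assms by auto
  ultimately show ?thesis by (intro Arg_div_eq) auto
qed

lemma Arg_quot_int:
  assumes "a \<noteq> 0" "b \<noteq> 0" "u1 \<noteq> 0" "u2 \<noteq> 0"
  shows "\<exists>k::int. Arg (a / b) = Arg (a/u1) - Arg (b/u2) + Arg (u1/u2) + 2*pi*k"
proof -
  have "is_Arg ((a/u1)/(b/u2)) (Arg (a/u1) - Arg (b/u2))" using Arg_divide[of "b/u2" "a/u1"] assms by simp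
  moreover have "is_Arg (u1/u2) (Arg (u1/u2))" using assms by (simp add: is_Arg_Arg)
  ultimately have "is_Arg (((a/u1)/(b/u2)) * (u1/u2)) (Arg (a/u1) - Arg (b/u2) + Arg (u1/u2))"
    by (rule is_Arg_mult)
  moreover have "((a/u1)/(b/u2)) * (u1/u2) = a / b" using assms by (simp add: field_simps)
  ultimately have "is_Arg (a/b) (Arg (a/u1) - Arg (b/u2) + Arg (u1/u2))" by simp
  moreover have "is_Arg (a/b) (Arg (a/b))" using assms by (simp add: is_Arg_Arg)
  ultimately show ?thesis using is_Arg_diff_int[of "a/b"] assms by simp
qed

definition Pot :: "complex \<Rightarrow> complex \<Rightarrow> complex \<Rightarrow> complex \<Rightarrow> complex \<Rightarrow> real" where
  "Pot v l u1 u2 w = (Arg ((w-l-v)/u1) - Arg ((w-l)/u2) - Arg ((w-l-v)/(w-l))) / (2*pi)"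

lemma cross_pot:
  assumes "u1 \<noteq> 0" "u2 \<noteq> 0" "Re ((w1-l-v)/u1) > 0" "Re ((w2-l-v)/u1) > 0"
    "Re ((w1-l)/u2) > 0" "Re ((w2-l)/u2) > 0"
  shows "of_int (cross v l w1 w2) = Pot v l u1 u2 w2 - Pot v l u1 u2 w1"
proof -
  have nz: "w1-l-v \<noteq> 0" "w2-l-v \<noteq> 0" "w1 - l \<noteq> 0" "w2 - l \<noteq> 0" using assms by auto
  have A1: "Arg ((w2 - l - v) / (w1 - l - v)) = Arg ((w2-l-v)/u1) - Arg ((w1-l-v)/u1)"
  proof -
    have "(w2 - l - v) / (w1 - l - v) = ((w2-l-v)/u1) / ((w1-l-v)/u1)" using assms by simp
    thus ?thesis using Arg_Re_pos_div[of "(w2-l-v)/u1" "(w1-l-v)/u1"] assms by simp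
  qed
  have A2: "Arg ((w2 - l) / (w1 - l)) = Arg ((w2-l)/u2) - Arg ((w1-l)/u2)"
  proof -
    have "(w2 - l) / (w1 - l) = ((w2-l)/u2) / ((w1-l)/u2)" using assms by simp
    thus ?thesis using Arg_Re_pos_div[of "(w2-l)/u2" "(w1-l)/u2"] assms by simp
  qed
  obtain k1::int where k1: "Arg ((w1-l-v)/(w1-l)) = Arg ((w1-l-v)/u1) - Arg ((w1-l)/u2) + Arg (u1/u2) + 2*pi*k1"
    using Arg_quot_int nz assms by blast
  obtain k2::int where k2: "Arg ((w2-l-v)/(w2-l)) = Arg ((w2-l-v)/u1) - Arg ((w2-l)/u2) + Arg (u1/u2) + 2*pi*k2"
    using Arg_quot_int nz assms by blast
  have P: "Pot v l u1 u2 w2 - Pot v l u1 u2 w1 = of_int (k1 - k2)"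
    unfolding Pot_def k1 k2 by (simp add: field_simps)
  have "(Arg ((w2 - l - v) / (w1 - l - v)) - Arg ((w2 - l) / (w1 - l))
      - Arg ((w2 - l - v) / (w2 - l)) + Arg ((w1 - l - v) / (w1 - l))) / (2 * pi) = of_int (k1 - k2)"
    unfolding A1 A2 k1 k2 by (simp add: field_simps)
  hence "cross v l w1 w2 = round (of_int (k1 - k2) :: real)" unfolding cross_def by simp
  hence "cross v l w1 w2 = k1 - k2" by (metis round_of_int)
  thus ?thesis using P by simp
qed

lemma Pot_same: 
  assumes "Re ((w-l-v)/u) > 0" "Re ((w-l)/u) > 0"
  shows "Pot v l u u w = 0"
proof -
  have "u \<noteq> 0" using assms by auto
  hence e: "(w-l-v)/(w-l) = ((w-l-v)/u) / ((w-l)/u)" by simp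
  have "Arg ((w-l-v)/(w-l)) = Arg ((w-l-v)/u) - Arg ((w-l)/u)"
    unfolding e by (rule Arg_Re_pos_div) (use assms in auto)
  thus ?thesis unfolding Pot_def by simp
qed

lemma cross_zero_sep:
  assumes "u \<noteq> 0" "Re ((w1-l-v)/u) > 0" "Re ((w2-l-v)/u) > 0"
    "Re ((w1-l)/u) > 0" "Re ((w2-l)/u) > 0"
  shows "cross v l w1 w2 = 0"
  using cross_pot[of u u w1 l v w2] Pot_same assms by simp

definition LB :: "int \<Rightarrow> complex set" where
  "LB N = (\<lambda>(a,b). of_int a + of_int b * \<i>) ` ({-N..N} \<times> {-N..N})"

lemma finite_LB: "finite (LB N)" unfolding LB_def by simp

lemma LB_Lat: "LB N \<subseteq> Lat" unfolding LB_def Lat_def by auto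

definition bnd :: "complex \<Rightarrow> complex \<Rightarrow> complex \<Rightarrow> int" where
  "bnd v z w = \<lceil>\<bar>Re z\<bar> + \<bar>Re w\<bar> + \<bar>Re v\<bar> + \<bar>Im z\<bar> + \<bar>Im w\<bar> + \<bar>Im v\<bar>\<rceil> + 1"

lemma cross_far:
  assumes "l = of_int a + of_int b * \<i>" "bnd v z w \<le> N" "\<not> (\<bar>a\<bar> \<le> N \<and> \<bar>b\<bar> \<le> N)"
  shows "cross v l z w = 0"
proof -
  have B: "\<bar>Re z\<bar> + \<bar>Re w\<bar> + \<bar>Re v\<bar> + \<bar>Im z\<bar> + \<bar>Im w\<bar> + \<bar>Im v\<bar> + 1 \<le> N"
    using assms(2) unfolding bnd_def by linarith
  have Rl: "Re l = a" "Im l = b" using assms(1) by auto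
  consider "a > N" | "a < -N" | "b > N" | "b < -N" using assms(3) by linarith
  thus ?thesis
  proof cases
    case 1
    show ?thesis by (rule cross_zero_sep[of "-1"]) (use B 1 Rl in auto)
  next
    case 2
    show ?thesis by (rule cross_zero_sep[of "1"]) (use B 2 Rl in auto)
  next
    case 3
    show ?thesis by (rule cross_zero_sep[of "-\<i>"]) (use B 3 Rl in auto)
  next
    case 4
    show ?thesis by (rule cross_zero_sep[of "\<i>"]) (use B 4 Rl in auto)
  qed
qed

lemma supp_LB:
  assumes "bnd v z w \<le> N"
  shows "{l \<in> Lat. cross v l z w \<noteq> 0} \<subseteq> LB N"
proof
  fix l assume "l \<in> {l \<in> Lat. cross v l z w \<noteq> 0}"
  then obtain a b :: int where l: "l = of_int a + of_int b * \<i>" and c: "cross v l z w \<noteq> 0"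
    unfolding Lat_def by auto
  hence "\<bar>a\<bar> \<le> N \<and> \<bar>b\<bar> \<le> N" using cross_far[OF l assms] by blast
  thus "l \<in> LB N" unfolding LB_def l by (auto intro!: image_eqI[where x="(a,b)"])
qed

lemma shift_sum_gen:
  assumes "finite T" "T \<subseteq> Lat" "{l \<in> Lat. cross v l z w \<noteq> 0} \<subseteq> T"
  shows "shift v z w = - (\<Sum>l\<in>T. cross v l z w)"
proof -
  have "(\<Sum>l\<in>{l \<in> Lat. cross v l z w \<noteq> 0}. cross v l z w) = (\<Sum>l\<in>T. cross v l z w)"
    by (rule sum.mono_neutral_left) (use assms in auto)
  thus ?thesis unfolding shift_def by simp
qed

lemma shift_LB:
  assumes "bnd v z w \<le> N"
  shows "shift v z w = - (\<Sum>l\<in>LB N. cross v l z w)"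
  by (rule shift_sum_gen) (use finite_LB LB_Lat supp_LB[OF assms] in auto)

definition sgc :: "real \<Rightarrow> complex" where "sgc r = (if r > 0 then 1 else -1)"

definition PotB :: "complex \<Rightarrow> real \<Rightarrow> complex \<Rightarrow> complex \<Rightarrow> real" where
  "PotB v x0 l w = Pot v l (sgc (x0 - Re (l+v))) (sgc (x0 - Re l)) w"

definition okb :: "complex \<Rightarrow> real \<Rightarrow> real \<Rightarrow> bool" where
  "okb v x0 y \<longleftrightarrow> (\<forall>r. min x0 y \<le> r \<and> r \<le> max x0 y \<longrightarrow> r \<notin> \<int> \<and> r - Re v \<notin> \<int>)"

lemma sgc_pos:
  assumes "\<not> (min x0 (Re w) \<le> Re P \<and> Re P \<le> max x0 (Re w))"
  shows "Re ((w - P) / sgc (x0 - Re P)) > 0"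
  using assms unfolding sgc_def by (auto simp: min_def max_def split: if_splits)

lemma Lat_Re_int: "l \<in> Lat \<Longrightarrow> Re l \<in> \<int>" unfolding Lat_def by auto
lemma Lat_Im_int: "l \<in> Lat \<Longrightarrow> Im l \<in> \<int>" unfolding Lat_def by auto

lemma band_cross:
  assumes "l \<in> Lat" "okb v x0 (Re w1)" "okb v x0 (Re w2)"
  shows "of_int (cross v l w1 w2) = PotB v x0 l w2 - PotB v x0 l w1"
proof -
  have i1: "Re l \<in> \<int>" using assms Lat_Re_int by blast
  hence i2: "Re (l+v) - Re v \<in> \<int>" by simp
  have n: "\<not> (min x0 (Re w) \<le> Re l \<and> Re l \<le> max x0 (Re w))"
          "\<not> (min x0 (Re w) \<le> Re (l+v) \<and> Re (l+v) \<le> max x0 (Re w))"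
    if "okb v x0 (Re w)" for w using that i1 i2 unfolding okb_def by blast+
  have p1: "Re ((w - l - v) / sgc (x0 - Re (l+v))) > 0" if "okb v x0 (Re w)" for w
    using sgc_pos[OF n(2)[OF that]] by (simp add: diff_diff_add)
  have p2: "Re ((w - l) / sgc (x0 - Re l)) > 0" if "okb v x0 (Re w)" for w
    using sgc_pos[OF n(1)[OF that]] by simp
  show ?thesis unfolding PotB_def
    by (rule cross_pot) (use p1 p2 assms in \<open>auto simp: sgc_def\<close>)
qed

definition Psi :: "complex \<Rightarrow> real \<Rightarrow> int \<Rightarrow> complex \<Rightarrow> real" where
  "Psi v x0 N w = (\<Sum>l\<in>LB N. PotB v x0 l w)"

lemma band_shift:
  assumes "okb v x0 (Re w1)" "okb v x0 (Re w2)" "bnd v w1 w2 \<le> N"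
  shows "of_int (shift v w1 w2) = Psi v x0 N w1 - Psi v x0 N w2"
proof -
  have "of_int (shift v w1 w2) = - (\<Sum>l\<in>LB N. of_int (cross v l w1 w2) :: real)"
    using shift_LB[OF assms(3)] by simp
  also have "\<dots> = - (\<Sum>l\<in>LB N. PotB v x0 l w2 - PotB v x0 l w1)"
    using band_cross[OF _ assms(1,2)] LB_Lat by (intro arg_cong[where f=uminus] sum.cong) auto
  finally show ?thesis unfolding Psi_def by (simp add: sum_subtractf)
qed

lemma Lat_iff: "z \<in> Lat \<longleftrightarrow> Re z \<in> \<int> \<and> Im z \<in> \<int>"
proof
  assume "z \<in> Lat" thus "Re z \<in> \<int> \<and> Im z \<in> \<int>" using Lat_Re_int Lat_Im_int by blast
next
  assume h: "Re z \<in> \<int> \<and> Im z \<in> \<int>"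
  then obtain a b :: int where "Re z = a" "Im z = b" by (metis Ints_cases)
  hence "z = of_int a + of_int b * \<i>" by (simp add: complex_eq_iff)
  thus "z \<in> Lat" unfolding Lat_def by blast
qed

lemma Lat_add: "l \<in> Lat \<Longrightarrow> m \<in> Lat \<Longrightarrow> l + m \<in> Lat" by (simp add: Lat_iff Ints_add)
lemma Lat_diff: "l \<in> Lat \<Longrightarrow> m \<in> Lat \<Longrightarrow> l - m \<in> Lat" by (simp add: Lat_iff Ints_diff)
lemma Lat_uminus: "l \<in> Lat \<Longrightarrow> - l \<in> Lat" by (simp add: Lat_iff)

lemma cross_translate: "cross v (l+m) (z+m) (w+m) = cross v l z w"
proof -
  have "w + m - (l + m) = w - l" "z + m - (l + m) = z - l" by simp_all
  thus ?thesis unfolding cross_def by simp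
qed

lemma shift_translate:
  assumes "m \<in> Lat"
  shows "shift v (z+m) (w+m) = shift v z w"
proof -
  define S where "S = {l \<in> Lat. cross v l z w \<noteq> 0}"
  have fS: "finite S" unfolding S_def
    using supp_LB[of v z w "bnd v z w"] finite_LB finite_subset by blast
  have "shift v (z+m) (w+m) = - (\<Sum>l\<in>(\<lambda>l. l+m) ` S. cross v l (z+m) (w+m))"
  proof (rule shift_sum_gen)
    show "finite ((\<lambda>l. l + m) ` S)" using fS by simp
    show "(\<lambda>l. l + m) ` S \<subseteq> Lat" unfolding S_def using Lat_add assms by auto
    show "{l \<in> Lat. cross v l (z + m) (w + m) \<noteq> 0} \<subseteq> (\<lambda>l. l + m) ` S"
    proof
      fix l assume "l \<in> {l \<in> Lat. cross v l (z + m) (w + m) \<noteq> 0}"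
      hence "l - m \<in> S" unfolding S_def using cross_translate[of v "l-m" m z w] Lat_diff assms by auto
      thus "l \<in> (\<lambda>l. l + m) ` S" by (auto intro!: image_eqI[where x="l-m"])
    qed
  qed
  also have "\<dots> = - (\<Sum>l\<in>S. cross v (l+m) (z+m) (w+m))"
    by (subst sum.reindex) (auto simp: inj_on_def)
  also have "\<dots> = - (\<Sum>l\<in>S. cross v l z w)" by (simp add: cross_translate)
  also have "\<dots> = shift v z w" unfolding shift_def S_def by simp
  finally show ?thesis .
qed

lemma shift_add3:
  assumes "okb v x0 (Re w1)" "okb v x0 (Re w2)" "okb v x0 (Re w3)"
  shows "shift v w1 w3 = shift v w1 w2 + shift v w2 w3"
proof -
  define N where "N = max (bnd v w1 w3) (max (bnd v w1 w2) (bnd v w2 w3))"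
  have "real_of_int (shift v w1 w3) = real_of_int (shift v w1 w2 + shift v w2 w3)"
    using band_shift[of v x0 w1 w3 N] band_shift[of v x0 w1 w2 N] band_shift[of v x0 w2 w3 N] assms
    unfolding N_def by simp
  thus ?thesis using of_int_eq_iff by blast
qed

lemma cross_self: "cross v l z z = 0"
proof -
  have a: "Arg (a/a) = 0" for a :: complex by (cases "a = 0") (auto simp: Arg_zero)
  show ?thesis unfolding cross_def a by simp
qed

lemma shift_self: "shift v z z = 0"
  unfolding shift_def cross_self by simp

lemma Arg_div_upper: "Im a > 0 \<Longrightarrow> Im b > 0 \<Longrightarrow> Arg (a/b) = Arg a - Arg b"
  by (rule Arg_div_eq) (use Arg_lt_pi[of a] Arg_lt_pi[of b] in auto)

lemma Arg_div_lower: "Im a < 0 \<Longrightarrow> Im b < 0 \<Longrightarrow> Arg (a/b) = Arg a - Arg b"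
  by (rule Arg_div_eq) (use Arg_neg_iff[of a] Arg_neg_iff[of b] mpi_less_Arg[of a] mpi_less_Arg[of b] in auto)

lemma Arg_minus_upper: "Im a > 0 \<Longrightarrow> Arg (-a) = Arg a - pi"
  using Arg_minus[of a] Arg_lt_pi[of a] by (cases "a = 0") auto

lemma Arg_minus_lower: "Im a < 0 \<Longrightarrow> Arg (-a) = Arg a + pi"
  using Arg_minus[of a] Arg_neg_iff[of a] by (cases "a = 0") auto

definition ind :: "real \<Rightarrow> real \<Rightarrow> real \<Rightarrow> real" where
  "ind th x a = (if a < x \<and> x < a + th then 1 else if a + th < x \<and> x < a then -1 else 0)"

lemma PotB_vert:
  assumes "x \<noteq> a" "x \<noteq> a + Re v" "Y > 0 \<and> Y > Im v \<or> Y < 0 \<and> Y < Im v"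
  shows "PotB v x (of_real a) (Complex x Y) = (if Y > 0 then -1/2 else 1/2) * ind (Re v) x a"
proof -
  define w where "w = Complex x Y"
  define al where "al = w - of_real a - v"
  define be where "be = w - of_real a"
  have Re_al: "Re al = x - a - Re v" and Im_al: "Im al = Y - Im v" unfolding al_def w_def by auto
  have Re_be: "Re be = x - a" and Im_be: "Im be = Y" unfolding be_def w_def by auto
  have P: "PotB v x (of_real a) w = Pot v (of_real a) (sgc (x - (a + Re v))) (sgc (x - a)) w"
    unfolding PotB_def by simp
  have Pd: "Pot v (of_real a) u1 u2 w = (Arg (al/u1) - Arg (be/u2) - Arg (al/be)) / (2*pi)" for u1 u2
    unfolding Pot_def al_def be_def by simp
  consider "a < x \<and> x < a + Re v" | "a + Re v < x \<and> x < a" | "x > a \<and> x > a + Re v" | "x < a \<and> x < a + Re v"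
    using assms by linarith
  thus ?thesis
  proof cases
    case 1
    hence s: "sgc (x - (a + Re v)) = -1" "sgc (x - a) = 1" unfolding sgc_def by auto
    have "PotB v x (of_real a) w = (Arg (-al) - Arg be - Arg (al/be)) / (2*pi)"
      unfolding P s Pd by simp
    also have "\<dots> = (if Y > 0 then -1/2 else 1/2)"
    proof (cases "Y > 0")
      case True
      hence "Im al > 0" "Im be > 0" using assms Im_al Im_be by auto
      thus ?thesis using True by (simp add: Arg_minus_upper Arg_div_upper)
    next
      case False
      hence "Im al < 0" "Im be < 0" using assms Im_al Im_be by auto
      thus ?thesis using False by (simp add: Arg_minus_lower Arg_div_lower)
    qed
    finally show ?thesis using 1 unfolding ind_def w_def by simp
  next
    case 2
    hence s: "sgc (x - (a + Re v)) = 1" "sgc (x - a) = -1" unfolding sgc_def by auto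
    have "PotB v x (of_real a) w = (Arg al - Arg (-be) - Arg (al/be)) / (2*pi)"
      unfolding P s Pd by simp
    also have "\<dots> = (if Y > 0 then 1/2 else -1/2)"
    proof (cases "Y > 0")
      case True
      hence "Im al > 0" "Im be > 0" using assms Im_al Im_be by auto
      thus ?thesis using True by (simp add: Arg_minus_upper Arg_div_upper)
    next
      case False
      hence "Im al < 0" "Im be < 0" using assms Im_al Im_be by auto
      thus ?thesis using False by (simp add: Arg_minus_lower Arg_div_lower)
    qed
    finally show ?thesis using 2 unfolding ind_def w_def by auto
  next
    case 3
    hence s: "sgc (x - (a + Re v)) = 1" "sgc (x - a) = 1" unfolding sgc_def by auto
    have "PotB v x (of_real a) w = 0" unfolding P s
      by (rule Pot_same) (use 3 Re_al Re_be in \<open>auto simp: al_def be_def\<close>)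
    thus ?thesis using 3 unfolding ind_def w_def by auto
  next
    case 4
    hence s: "sgc (x - (a + Re v)) = -1" "sgc (x - a) = -1" unfolding sgc_def by auto
    have "PotB v x (of_real a) w = 0" unfolding P s
      by (rule Pot_same) (use 4 Re_al Re_be in \<open>auto simp: al_def be_def\<close>)
    thus ?thesis using 4 unfolding ind_def w_def by auto
  qed
qed

lemma tele_int: "(\<Sum>b\<in>{m..m + int k}. F (b-1) - F b) = (F (m-1) - F (m + int k) :: real)"
proof (induction k)
  case 0 thus ?case by simp
next
  case (Suc k)
  have e: "{m..m + int k + 1} = insert (m + int k + 1) {m..m + int k}" by auto
  have e2: "m + int (Suc k) = m + int k + 1" by simp
  have "(\<Sum>b\<in>insert (m+int k+1) {m..m+int k}. F (b-1) - F b) =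
     (F (m + int k + 1 - 1) - F (m+int k+1)) + (\<Sum>b\<in>{m..m+int k}. F (b-1) - F b)"
    by (rule sum.insert) auto
  also have "\<dots> = F (m - 1) - F (m+int k+1)" using Suc by simp
  finally have r: "(\<Sum>b\<in>insert (m+int k+1) {m..m+int k}. F (b-1) - F b) = F (m - 1) - F (m+int k+1)" .
  show ?case unfolding e2 e by (rule r)
qed

lemma tele_int2:
  fixes N :: int
  assumes "0 \<le> N"
  shows "(\<Sum>b\<in>{-N..N}. F (b-1) - F b) = (F (-N-1) - F N :: real)"
proof -
  have kk: "-N + int (nat (2*N)) = N" using assms by simp
  show ?thesis using tele_int[of F "-N" "nat (2*N)"] unfolding kk by simp
qed

lemma count_le:
  fixes N m :: int
  assumes "-N - 1 \<le> m" "m \<le> N"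
  shows "(\<Sum>a\<in>{-N..N}. (if a \<le> m then 1 else 0 :: real)) = of_int (m + N + 1)"
proof -
  have "(\<Sum>a\<in>{-N..N}. (if a \<le> m then 1 else 0 :: real)) = (\<Sum>a\<in>{a\<in>{-N..N}. a \<le> m}. 1)"
    by (rule sum.inter_filter[symmetric]) simp
  also have "{a\<in>{-N..N}. a \<le> m} = {-N..m}" using assms by auto
  finally show ?thesis using assms by simp
qed

lemma ind_split:
  assumes "x \<noteq> a" "x \<noteq> a + th"
  shows "ind th x a = (if a < x then 1 else 0) - (if a + th < x then 1 else 0)"
  using assms unfolding ind_def by auto

lemma sum_ind:
  assumes "x \<notin> \<int>" "x - th \<notin> \<int>" "\<bar>x\<bar> + \<bar>th\<bar> + 2 \<le> N"
  shows "(\<Sum>a\<in>{-N..N}. ind th x (of_int a)) = of_int (\<lfloor>x\<rfloor> - \<lfloor>x - th\<rfloor>)"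
proof -
  have ne: "x \<noteq> of_int a" "x \<noteq> of_int a + th" for a :: int
  proof -
    show "x \<noteq> of_int a" using assms(1) Ints_of_int by force
    show "x \<noteq> of_int a + th"
    proof
      assume "x = of_int a + th" hence "x - th = of_int a" by simp
      thus False using assms(2) Ints_of_int by metis
    qed
  qed
  have lt1: "(of_int a < x) \<longleftrightarrow> a \<le> \<lfloor>x\<rfloor>" for a :: int
  proof -
    have "a \<le> \<lfloor>x\<rfloor> \<longleftrightarrow> of_int a \<le> x" by (rule le_floor_iff)
    thus ?thesis using ne(1)[of a] by linarith
  qed
  have lt2: "(of_int a + th < x) \<longleftrightarrow> a \<le> \<lfloor>x - th\<rfloor>" for a :: int
  proof -
    have "a \<le> \<lfloor>x - th\<rfloor> \<longleftrightarrow> of_int a \<le> x - th" by (rule le_floor_iff)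
    thus ?thesis using ne(2)[of a] by linarith
  qed
  have "(\<Sum>a\<in>{-N..N}. ind th x (of_int a)) =
        (\<Sum>a\<in>{-N..N}. (if a \<le> \<lfloor>x\<rfloor> then 1 else 0 :: real)) - (\<Sum>a\<in>{-N..N}. (if a \<le> \<lfloor>x - th\<rfloor> then 1 else 0 :: real))"
    unfolding sum_subtractf[symmetric] using ind_split[OF ne] lt1 lt2 by (intro sum.cong) auto
  also have "\<dots> = of_int (\<lfloor>x\<rfloor> + N + 1) - of_int (\<lfloor>x - th\<rfloor> + N + 1)"
  proof -
    have "-N - 1 \<le> \<lfloor>x\<rfloor>" "\<lfloor>x\<rfloor> \<le> N" "-N - 1 \<le> \<lfloor>x - th\<rfloor>" "\<lfloor>x - th\<rfloor> \<le> N"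
      using assms(3) by linarith+
    thus ?thesis using count_le by simp
  qed
  finally show ?thesis by simp
qed

lemma okb_self: "x \<notin> \<int> \<Longrightarrow> x - Re v \<notin> \<int> \<Longrightarrow> okb v x x"
  unfolding okb_def by auto

lemma sum_LB:
  "(\<Sum>l\<in>LB N. f l) = (\<Sum>a\<in>{-N..N}. \<Sum>b\<in>{-N..N}. f (of_int a + of_int b * \<i>))"
proof -
  have inj: "inj_on (\<lambda>(a,b). of_int a + of_int b * \<i> :: complex) ({-N..N} \<times> {-N..N})"
    by (auto simp: inj_on_def complex_eq_iff)
  have "(\<Sum>l\<in>LB N. f l) = (\<Sum>p\<in>{-N..N} \<times> {-N..N}. f ((\<lambda>(a,b). of_int a + of_int b * \<i>) p))"
    unfolding LB_def by (rule sum.reindex[OF inj, unfolded comp_def])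
  also have "\<dots> = (\<Sum>a\<in>{-N..N}. \<Sum>b\<in>{-N..N}. f (of_int a + of_int b * \<i>))"
    by (simp add: sum.cartesian_product split_def)
  finally show ?thesis .
qed

lemma vert_unit:
  assumes "x \<notin> \<int>" "x - Re v \<notin> \<int>"
  shows "shift v (Complex x y) (Complex x y + \<i>) = \<lfloor>x\<rfloor> - \<lfloor>x - Re v\<rfloor>"
proof -
  define z where "z = Complex x y"
  define N where "N = max (bnd v z (z + \<i>)) (\<lceil>\<bar>x\<bar> + \<bar>Re v\<bar> + \<bar>y\<bar> + \<bar>Im v\<bar>\<rceil> + 2)"
  have N1: "bnd v z (z + \<i>) \<le> N" unfolding N_def by simp
  have N2: "\<bar>x\<bar> + \<bar>Re v\<bar> + \<bar>y\<bar> + \<bar>Im v\<bar> + 2 \<le> N" unfolding N_def by linarith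
  hence N0: "0 \<le> N" by linarith
  have ok: "okb v x x" using okb_self assms by blast
  define F where "F a b = PotB v x (of_int a) (Complex x (y - of_int b))" for a b :: int
  have cr: "real_of_int (cross v (of_int a + of_int b * \<i>) z (z + \<i>)) = F a (b-1) - F a b" for a b :: int
  proof -
    have "cross v (of_int a + of_int b * \<i>) z (z + \<i>) =
          cross v (of_int a + of_int b * \<i>) (Complex x (y - b) + of_int b * \<i>) (Complex x (y - b + 1) + of_int b * \<i>)"
    proof -
      have "Complex x (y - b) + of_int b * \<i> = z" "Complex x (y - b + 1) + of_int b * \<i> = z + \<i>"
        unfolding z_def by (simp_all add: complex_eq_iff)
      thus ?thesis by simp
    qed
    also have "\<dots> = cross v (of_int a) (Complex x (y - b)) (Complex x (y - b + 1))"
      by (rule cross_translate)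
    finally have "real_of_int (cross v (of_int a + of_int b * \<i>) z (z + \<i>)) =
        PotB v x (of_int a) (Complex x (y - b + 1)) - PotB v x (of_int a) (Complex x (y - b))"
      using band_cross[of "of_int a" v x "Complex x (y - b)" "Complex x (y - b + 1)"] ok
      by (simp add: Lat_iff)
    thus ?thesis unfolding F_def by (simp add: algebra_simps)
  qed
  have col: "(\<Sum>b\<in>{-N..N}. real_of_int (cross v (of_int a + of_int b * \<i>) z (z + \<i>))) = - ind (Re v) x (of_int a)"
    for a :: int
  proof -
    have "(\<Sum>b\<in>{-N..N}. real_of_int (cross v (of_int a + of_int b * \<i>) z (z + \<i>))) = F a (-N-1) - F a N"
      unfolding cr using tele_int2[OF N0, of "F a"] by simp
    also have "\<dots> = - ind (Re v) x (of_int a)"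
    proof -
      have ne: "x \<noteq> of_int a" "x \<noteq> of_int a + Re v"
      proof -
        show "x \<noteq> of_int a" using assms(1) Ints_of_int by force
        show "x \<noteq> of_int a + Re v"
        proof
          assume "x = of_int a + Re v" hence "x - Re v = of_int a" by simp
          thus False using assms(2) Ints_of_int by metis
        qed
      qed
      have ab: "\<bar>y\<bar> \<ge> y" "\<bar>y\<bar> \<ge> -y" "\<bar>Im v\<bar> \<ge> Im v" "\<bar>Im v\<bar> \<ge> - Im v"
        "\<bar>x\<bar> \<ge> 0" "\<bar>Re v\<bar> \<ge> 0" by auto
      have c1: "y - of_int (-N-1) > 0" "y - of_int (-N-1) > Im v" using N2 ab by linarith+
      have c2: "y - of_int N < 0" "y - of_int N < Im v" using N2 ab by linarith+
      have t: "F a (-N-1) = -1/2 * ind (Re v) x (of_int a)"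
        unfolding F_def using PotB_vert[OF ne, of "y - of_int (-N-1)"] c1 by simp
      have b: "F a N = 1/2 * ind (Re v) x (of_int a)"
        unfolding F_def using PotB_vert[OF ne, of "y - of_int N"] c2 by simp
      show ?thesis unfolding t b by simp
    qed
    finally show ?thesis .
  qed
  have "real_of_int (shift v z (z + \<i>)) = - (\<Sum>l\<in>LB N. real_of_int (cross v l z (z + \<i>)))"
    using shift_LB[OF N1] by simp
  also have "\<dots> = - (\<Sum>a\<in>{-N..N}. \<Sum>b\<in>{-N..N}. real_of_int (cross v (of_int a + of_int b * \<i>) z (z + \<i>)))"
    by (simp add: sum_LB)
  also have "\<dots> = (\<Sum>a\<in>{-N..N}. ind (Re v) x (of_int a))"
    unfolding col by (simp add: sum_negf)
  also have "\<dots> = of_int (\<lfloor>x\<rfloor> - \<lfloor>x - Re v\<rfloor>)"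
    by (rule sum_ind) (use assms N2 in auto)
  finally show ?thesis unfolding z_def using of_int_eq_iff by blast
qed

definition regx :: "real \<Rightarrow> real \<Rightarrow> bool" where
  "regx th x \<longleftrightarrow> x \<notin> \<int> \<and> x - th \<notin> \<int>"

definition kap :: "real \<Rightarrow> real \<Rightarrow> int" where
  "kap th x = \<lfloor>x\<rfloor> - \<lfloor>x - th\<rfloor>"

definition cb :: "real \<Rightarrow> real \<Rightarrow> real" where
  "cb th x = of_int \<lfloor>x\<rfloor> + (if frac x < frac th then frac th / 2 else (1 + frac th) / 2)"

definition betw :: "real \<Rightarrow> real \<Rightarrow> real \<Rightarrow> bool" where
  "betw x y r \<longleftrightarrow> min x y \<le> r \<and> r \<le> max x y"

lemma okb_betw: "okb v x y \<longleftrightarrow> (\<forall>r. betw x y r \<longrightarrow> regx (Re v) r)"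
  unfolding okb_def betw_def regx_def by blast

lemma fr_int: "x - th \<in> \<int> \<longleftrightarrow> frac x = frac th"
proof
  assume "x - th \<in> \<int>"
  then obtain m where m: "x - th = of_int m" by (metis Ints_cases)
  hence "x = th + of_int m" by simp
  thus "frac x = frac th" by simp
next
  assume "frac x = frac th"
  hence "x - th = of_int (\<lfloor>x\<rfloor> - \<lfloor>th\<rfloor>)" unfolding frac_def by simp
  thus "x - th \<in> \<int>" by simp
qed

lemma floor_frac_split: "x = of_int \<lfloor>x\<rfloor> + frac x" unfolding frac_def by simp

lemma regx_frac: "regx th x \<longleftrightarrow> frac x \<noteq> 0 \<and> frac x \<noteq> frac th"
  unfolding regx_def fr_int by simp

lemma okb_intro:
  assumes "regx th x" "regx th y" "\<lfloor>x\<rfloor> = \<lfloor>y\<rfloor>" "(frac x < frac th \<longleftrightarrow> frac y < frac th)"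
    "betw x y r"
  shows "regx th r"
proof -
  define n where "n = \<lfloor>x\<rfloor>"
  have fx: "0 < frac x" "frac x < 1" "0 < frac y" "frac y < 1" "frac x \<noteq> frac th" "frac y \<noteq> frac th"
    using assms(1,2) frac_lt_1 regx_frac[of th x] regx_frac[of th y] by (auto simp: regx_def)
  have x: "x = n + frac x" and y: "y = n + frac y"
    using floor_frac_split[of x] floor_frac_split[of y] assms(3) unfolding n_def by auto
  have mm: "min x y \<le> r" "r \<le> max x y" using assms(5) unfolding betw_def by auto
  have "n < x" "n < y" "x < n + 1" "y < n + 1" using x y fx by linarith+
  hence "n < min x y" "max x y < n + 1" by auto
  hence rr: "n < r" "r < n + 1" using mm by linarith+
  hence fl: "\<lfloor>r\<rfloor> = n" by (simp add: floor_eq_iff)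
  have fr: "frac r = r - n" unfolding frac_def fl by simp
  have "frac r \<noteq> 0" using rr fr by simp
  moreover have "frac r \<noteq> frac th"
  proof (cases "frac x < frac th")
    case True
    hence "frac y < frac th" using assms(4) by blast
    hence "x < n + frac th" "y < n + frac th" using True x y by linarith+
    hence "max x y < n + frac th" by simp
    thus ?thesis using fr mm by linarith
  next
    case False
    hence "frac x > frac th" "frac y > frac th" using assms(4) fx by auto
    hence "x > n + frac th" "y > n + frac th" using x y by linarith+
    hence "min x y > n + frac th" by simp
    thus ?thesis using fr mm by linarith
  qed
  ultimately show ?thesis using regx_frac by blast
qed

lemma okb_dest:
  assumes "\<And>r. betw x y r \<Longrightarrow> regx th r"
  shows "\<lfloor>x\<rfloor> = \<lfloor>y\<rfloor> \<and> (frac x < frac th \<longleftrightarrow> frac y < frac th)"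
proof -
  have gen: "\<lfloor>a\<rfloor> = \<lfloor>b\<rfloor> \<and> (frac a < frac th \<longleftrightarrow> frac b < frac th)"
    if ab: "a \<le> b" and h: "\<And>r. a \<le> r \<Longrightarrow> r \<le> b \<Longrightarrow> regx th r" for a b
  proof -
    have "\<not> \<lfloor>a\<rfloor> < \<lfloor>b\<rfloor>"
    proof
      assume "\<lfloor>a\<rfloor> < \<lfloor>b\<rfloor>"
      hence "\<lfloor>a\<rfloor> + 1 \<le> \<lfloor>b\<rfloor>" by simp
      hence "of_int \<lfloor>a\<rfloor> + 1 \<le> (of_int \<lfloor>b\<rfloor> :: real)" by linarith
      moreover have "a < of_int \<lfloor>a\<rfloor> + 1" by linarith
      ultimately have "a \<le> of_int \<lfloor>b\<rfloor>" by linarith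
      moreover have "of_int \<lfloor>b\<rfloor> \<le> b" by simp
      ultimately have "regx th (of_int \<lfloor>b\<rfloor>)" using h by blast
      thus False unfolding regx_def by simp
    qed
    moreover have "\<lfloor>a\<rfloor> \<le> \<lfloor>b\<rfloor>" using ab floor_mono by blast
    ultimately have fl: "\<lfloor>a\<rfloor> = \<lfloor>b\<rfloor>" by simp
    have "\<not> (frac a < frac th \<and> \<not> frac b < frac th)"
    proof
      assume c: "frac a < frac th \<and> \<not> frac b < frac th"
      define r where "r = of_int \<lfloor>a\<rfloor> + frac th"
      have "a \<le> r" using c floor_frac_split[of a] unfolding r_def by linarith
      moreover have "r \<le> b" using c floor_frac_split[of b] fl unfolding r_def by linarith
      ultimately have "regx th r" using h by blast
      moreover have "r - th \<in> \<int>" unfolding r_def frac_def by simp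
      ultimately show False unfolding regx_def by blast
    qed
    moreover have "\<not> (\<not> frac a < frac th \<and> frac b < frac th)"
    proof
      assume c: "\<not> frac a < frac th \<and> frac b < frac th"
      have "frac b = b - \<lfloor>a\<rfloor>" "frac a = a - \<lfloor>a\<rfloor>" using fl unfolding frac_def by auto
      thus False using c ab by linarith
    qed
    ultimately show ?thesis using fl by blast
  qed
  show ?thesis
  proof (cases "x \<le> y")
    case True thus ?thesis using gen[of x y] assms unfolding betw_def by auto
  next
    case False thus ?thesis using gen[of y x] assms unfolding betw_def by auto
  qed
qed

lemma kap_frac:
  assumes "regx th x"
  shows "kap th x = \<lfloor>th\<rfloor> + (if frac x < frac th then 1 else 0)"
proof -
  have e: "x - th = of_int (\<lfloor>x\<rfloor> - \<lfloor>th\<rfloor>) + (frac x - frac th)" unfolding frac_def by simp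
  have b: "0 \<le> frac x" "frac x < 1" "0 \<le> frac th" "frac th < 1" using frac_lt_1 by auto
  have "\<lfloor>x - th\<rfloor> = \<lfloor>x\<rfloor> - \<lfloor>th\<rfloor> - (if frac x < frac th then 1 else 0)"
  proof (cases "frac x < frac th")
    case True
    have "\<lfloor>x - th\<rfloor> = \<lfloor>x\<rfloor> - \<lfloor>th\<rfloor> - 1"
      unfolding floor_eq_iff of_int_diff of_int_1 using e b True by linarith
    thus ?thesis using True by simp
  next
    case False
    have "\<lfloor>x - th\<rfloor> = \<lfloor>x\<rfloor> - \<lfloor>th\<rfloor>"
      unfolding floor_eq_iff of_int_diff using e b False by linarith
    thus ?thesis using False by simp
  qed
  thus ?thesis unfolding kap_def by simp
qed

lemma cb_props:
  assumes "regx th x"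
  shows "\<lfloor>cb th x\<rfloor> = \<lfloor>x\<rfloor>" "(frac (cb th x) < frac th \<longleftrightarrow> frac x < frac th)" "regx th (cb th x)"
proof -
  define off where "off = (if frac x < frac th then frac th / 2 else (1 + frac th) / 2)"
  have b: "0 \<le> frac x" "frac x < 1" "0 \<le> frac th" "frac th < 1" using frac_lt_1 by auto
  have oc: "frac x < frac th \<Longrightarrow> 2 * off = frac th" "\<not> frac x < frac th \<Longrightarrow> 2 * off = 1 + frac th"
    by (simp_all add: off_def)
  have off1: "0 < off \<and> off < 1"
  proof (cases "frac x < frac th")
    case True thus ?thesis using oc(1)[OF True] b by linarith
  next
    case False thus ?thesis using oc(2)[OF False] b by linarith
  qed
  have cbe: "cb th x = of_int \<lfloor>x\<rfloor> + off" unfolding cb_def off_def by simp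
  show f: "\<lfloor>cb th x\<rfloor> = \<lfloor>x\<rfloor>" unfolding cbe using off1 by (simp add: floor_eq_iff)
  have fr: "frac (cb th x) = off" unfolding frac_def f unfolding cbe by simp
  show s: "(frac (cb th x) < frac th \<longleftrightarrow> frac x < frac th)"
  proof (cases "frac x < frac th")
    case True thus ?thesis using oc(1)[OF True] b fr by linarith
  next
    case False thus ?thesis using oc(2)[OF False] b fr by linarith
  qed
  have "off \<noteq> frac th"
  proof (cases "frac x < frac th")
    case True thus ?thesis using oc(1)[OF True] b by linarith
  next
    case False thus ?thesis using oc(2)[OF False] b by linarith
  qed
  thus "regx th (cb th x)" unfolding regx_frac fr using off1 by linarith
qed

lemma regx_cb_betw:
  assumes "regx th x" "betw (cb th x) x r"
  shows "regx th r"
  using okb_intro[OF cb_props(3)[OF assms(1)] assms(1) cb_props(1,2)[OF assms(1)] assms(2)] .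

lemma band_eq:
  assumes "\<And>r. betw x y r \<Longrightarrow> regx th r"
  shows "cb th x = cb th y" "kap th x = kap th y"
proof -
  have rx: "regx th x" "regx th y" using assms unfolding betw_def by auto
  have d: "\<lfloor>x\<rfloor> = \<lfloor>y\<rfloor> \<and> (frac x < frac th \<longleftrightarrow> frac y < frac th)" using okb_dest assms by blast
  show "cb th x = cb th y" unfolding cb_def using d by simp
  show "kap th x = kap th y" using kap_frac[OF rx(1)] kap_frac[OF rx(2)] d by simp
qed

lemma regx_int_shift: "regx th (x + of_int m) \<longleftrightarrow> regx th x"
  unfolding regx_frac by simp

lemma kap_int_shift: "kap th (x + of_int m) = kap th x"
proof -
  have "x + of_int m - th = (x - th) + of_int m" by simp
  thus ?thesis unfolding kap_def by (simp only: floor_add_int) simp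
qed

lemma cb_int_shift: "cb th (x + of_int m) = cb th x + of_int m"
  unfolding cb_def by simp

lemma seg_Re:
  assumes "w \<in> closed_segment a b"
  shows "betw (Re a) (Re b) (Re w)"
proof -
  obtain u where u: "0 \<le> u" "u \<le> 1" "w = (1 - u) *\<^sub>R a + u *\<^sub>R b" using assms in_segment(1) by blast
  hence r: "Re w = (1 - u) * Re a + u * Re b" by simp
  have "min (Re a) (Re b) \<le> (1 - u) * Re a + u * Re b"
  proof -
    have "(1-u) * min (Re a) (Re b) \<le> (1-u) * Re a" "u * min (Re a) (Re b) \<le> u * Re b"
      using u by (auto intro: mult_left_mono)
    moreover have "(1-u) * min (Re a) (Re b) + u * min (Re a) (Re b) = min (Re a) (Re b)" by (simp add: algebra_simps)
    ultimately show ?thesis by linarith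
  qed
  moreover have "(1 - u) * Re a + u * Re b \<le> max (Re a) (Re b)"
  proof -
    have "(1-u) * Re a \<le> (1-u) * max (Re a) (Re b)" "u * Re b \<le> u * max (Re a) (Re b)"
      using u by (auto intro: mult_left_mono)
    moreover have "(1-u) * max (Re a) (Re b) + u * max (Re a) (Re b) = max (Re a) (Re b)" by (simp add: algebra_simps)
    ultimately show ?thesis by linarith
  qed
  ultimately show ?thesis unfolding betw_def r by simp
qed

lemma sing_Re: "w \<in> sing v \<Longrightarrow> \<not> regx (Re v) (Re w)"
  unfolding sing_def regx_def by (auto simp: Lat_iff)

lemma seg_avoid:
  assumes "\<And>r. betw (Re a) (Re b) r \<Longrightarrow> regx (Re v) r"
  shows "closed_segment a b \<inter> sing v = {}"
  using seg_Re sing_Re assms by blast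

lemma vseg_mem:
  assumes "T > 0" "Re w = Re z" "Im z \<le> Im w" "Im w \<le> Im z + T"
  shows "w \<in> closed_segment z (z + \<i> * of_real T)"
proof -
  define u where "u = (Im w - Im z) / T"
  have u: "0 \<le> u" "u \<le> 1" unfolding u_def using assms by auto
  have uT: "u * T = Im w - Im z" unfolding u_def using assms by simp
  have "Im ((1 - u) *\<^sub>R z + u *\<^sub>R (z + \<i> * of_real T)) = Im z + u * T"
    by (simp add: algebra_simps)
  moreover have "Re ((1 - u) *\<^sub>R z + u *\<^sub>R (z + \<i> * of_real T)) = Re z"
    by (simp add: algebra_simps)
  ultimately have "w = (1 - u) *\<^sub>R z + u *\<^sub>R (z + \<i> * of_real T)"
    using assms uT by (simp add: complex_eq_iff)
  thus ?thesis using u in_segment(1) by blast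
qed

lemma okb_vert: "regx (Re v) x \<Longrightarrow> okb v x x"
  unfolding okb_betw betw_def by auto

lemma shift_antisym:
  assumes "okb v x0 (Re a)" "okb v x0 (Re b)"
  shows "shift v a b = - shift v b a"
  using shift_add3[OF assms(1,2,1)] shift_self by simp

lemma vert_nat:
  assumes "regx (Re v) (Re z)"
  shows "shift v z (z + of_nat k * \<i>) = of_nat k * kap (Re v) (Re z)"
proof (induction k)
  case 0 thus ?case using shift_self by simp
next
  case (Suc k)
  have ok: "okb v (Re z) (Re z)" using okb_vert assms by blast
  have "shift v z (z + of_nat (Suc k) * \<i>) = shift v z (z + of_nat k * \<i>) + shift v (z + of_nat k * \<i>) (z + of_nat (Suc k) * \<i>)"
    by (rule shift_add3[of v "Re z"]) (use ok in auto)
  moreover have "shift v (z + of_nat k * \<i>) (z + of_nat (Suc k) * \<i>) = kap (Re v) (Re z)"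
  proof -
    have e: "z + of_nat k * \<i> = Complex (Re z) (Im z + k)" "z + of_nat (Suc k) * \<i> = Complex (Re z) (Im z + k) + \<i>"
      by (simp_all add: complex_eq_iff)
    show ?thesis unfolding e kap_def
      by (rule vert_unit) (use assms in \<open>auto simp: regx_def\<close>)
  qed
  ultimately show ?case using Suc by (simp add: algebra_simps)
qed

lemma vert_int:
  assumes "regx (Re v) (Re z)"
  shows "shift v z (z + of_int n * \<i>) = n * kap (Re v) (Re z)"
proof (cases "n \<ge> 0")
  case True
  then obtain k where "n = int k" by (metis nonneg_eq_int)
  thus ?thesis using vert_nat[OF assms, of k] by simp
next
  case False
  then obtain k where k: "n = - int k" by (metis nonpos_int_cases not_le less_imp_le)
  define z' where "z' = z + of_int n * \<i>"
  have r: "Re z' = Re z" unfolding z'_def by simp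
  have "shift v z' (z' + of_nat k * \<i>) = of_nat k * kap (Re v) (Re z)"
    using vert_nat[of v z' k] assms r by simp
  moreover have "z' + of_nat k * \<i> = z" unfolding z'_def k by simp
  moreover have "shift v z z' = - shift v z' z"
    by (rule shift_antisym[of v "Re z"]) (use okb_vert assms r in auto)
  moreover have "z + of_int n * \<i> = z'" by (simp add: z'_def)
  ultimately show ?thesis using k by simp
qed

definition Phi :: "complex \<Rightarrow> pt \<Rightarrow> int" where
  "Phi v p = snd p + shift v (fst p) (of_real (cb (Re v) (Re (fst p))))"

lemma okb_cb: "regx (Re v) x \<Longrightarrow> okb v (cb (Re v) x) x"
  unfolding okb_betw using regx_cb_betw by blast

lemma okb_cb_self: "regx (Re v) x \<Longrightarrow> okb v (cb (Re v) x) (cb (Re v) x)"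
  using okb_vert cb_props(3) by blast

lemma phi_vflow:
  assumes "regx (Re v) (Re (fst p))"
  shows "Phi v (vflow v p t) = Phi v p"
proof -
  define z where "z = fst p"
  define c where "c = cb (Re v) (Re z)"
  have r: "Re (z + \<i> * of_real t) = Re z" by simp
  have "shift v z (of_real c) = shift v z (z + \<i> * of_real t) + shift v (z + \<i> * of_real t) (of_real c)"
    by (rule shift_add3[of v c]) (use okb_cb okb_cb_self assms in \<open>auto simp: c_def z_def\<close>)
  thus ?thesis unfolding Phi_def vflow_def by (simp add: z_def c_def)
qed

lemma phi_hflow:
  assumes "\<And>r. betw (Re (fst p)) (Re (fst p) + s) r \<Longrightarrow> regx (Re v) r"
  shows "Phi v (hflow v p s) = Phi v p"
proof -
  define z where "z = fst p"
  define c where "c = cb (Re v) (Re z)"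
  have rz: "regx (Re v) (Re z)" "regx (Re v) (Re z + s)" using assms unfolding z_def betw_def by auto
  have ce: "cb (Re v) (Re z + s) = c" unfolding c_def using band_eq(1)[of "Re z" "Re z + s" "Re v"] assms
    unfolding z_def by auto
  have r: "Re (z + of_real s) = Re z + s" by simp
  have "shift v z (of_real c) = shift v z (z + of_real s) + shift v (z + of_real s) (of_real c)"
  proof (rule shift_add3[of v c])
    show "okb v c (Re z)" using okb_cb rz unfolding c_def by blast
    show "okb v c (Re (z + of_real s))" using okb_cb[OF rz(2)] ce r by simp
    show "okb v c (Re (of_real c))" using okb_cb_self rz unfolding c_def by simp
  qed
  thus ?thesis unfolding Phi_def hflow_def using ce by (simp add: z_def c_def)
qed

lemma phi_lat:
  assumes "regx (Re v) (Re (fst p))" "fst q - fst p \<in> Lat" "snd p mod int d = snd q mod int d"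
  shows "gcd (kap (Re v) (Re (fst p))) (int d) dvd (Phi v q - Phi v p)"
proof -
  define z where "z = fst p"
  define x where "x = Re z"
  define c where "c = cb (Re v) x"
  define k where "k = kap (Re v) x"
  obtain a b :: int where ab: "fst q - fst p = of_int a + of_int b * \<i>" using assms(2) unfolding Lat_def by auto
  have fq: "fst q = (z + of_int b * \<i>) + of_int a" using ab unfolding z_def by (simp add: algebra_simps)
  have rq: "Re (fst q) = x + of_int a" unfolding fq x_def by simp
  have cq: "cb (Re v) (Re (fst q)) = c + of_int a" unfolding rq c_def by (rule cb_int_shift)
  have rx: "regx (Re v) x" using assms(1) unfolding x_def z_def .
  have s1: "shift v (fst q) (of_real (cb (Re v) (Re (fst q)))) = shift v (z + of_int b * \<i>) (of_real c)"
  proof -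
    have e: "(of_real (cb (Re v) (Re (fst q))) :: complex) = of_real c + of_int a" using cq by simp
    have "shift v (fst q) (of_real (cb (Re v) (Re (fst q)))) = shift v ((z + of_int b * \<i>) + of_int a) (of_real c + of_int a)"
      unfolding e using fq by simp
    also have "\<dots> = shift v (z + of_int b * \<i>) (of_real c)"
      by (rule shift_translate) (simp add: Lat_iff)
    finally show ?thesis .
  qed
  have s2: "shift v (z + of_int b * \<i>) (of_real c) = shift v (z + of_int b * \<i>) z + shift v z (of_real c)"
    by (rule shift_add3[of v c]) (use okb_cb okb_cb_self rx in \<open>auto simp: c_def x_def\<close>)
  have s3: "shift v (z + of_int b * \<i>) z = - b * k"
  proof -
    have "shift v (z + of_int b * \<i>) ((z + of_int b * \<i>) + of_int (-b) * \<i>) = (-b) * kap (Re v) (Re (z + of_int b * \<i>))"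
      by (rule vert_int) (use rx in \<open>simp add: x_def\<close>)
    thus ?thesis unfolding k_def x_def by simp
  qed
  have "Phi v q - Phi v p = (snd q - snd p) - b * k"
    unfolding Phi_def s1 s2 s3 by (simp add: z_def c_def x_def)
  moreover have "int d dvd (snd q - snd p)" using assms(3) by (metis mod_eq_dvd_iff)
  moreover have "gcd k (int d) dvd (snd q - snd p)" using gcd_dvd2 dvd_trans calculation(2) by blast
  moreover have "gcd k (int d) dvd b * k" by (simp add: dvd_mult)
  ultimately have "gcd k (int d) dvd (Phi v q - Phi v p)" by simp
  thus ?thesis unfolding k_def x_def z_def .
qed




lemma vflow_fst: "fst (vflow v p t) = fst p + \<i> * of_real t" unfolding vflow_def by simp
lemma vflow_snd: "snd (vflow v p t) = snd p + shift v (fst p) (fst p + \<i> * of_real t)" unfolding vflow_def by simp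

lemma vseg_avoid:
  assumes "regx (Re v) (Re z)"
  shows "closed_segment z (z + \<i> * of_real T) \<inter> sing v = {}"
  by (rule seg_avoid) (use assms in \<open>auto simp: betw_def\<close>)

lemma vperiods_iff:
  assumes "regx (Re v) (Re (fst p))"
  shows "T \<in> vperiods v d p \<longleftrightarrow> (\<exists>n::int. n > 0 \<and> T = of_int n \<and> int d dvd n * kap (Re v) (Re (fst p)))"
proof
  assume "T \<in> vperiods v d p"
  hence T: "T > 0" "same d (vflow v p T) p" unfolding vperiods_def by auto
  hence "fst p - (fst p + \<i> * of_real T) \<in> Lat" unfolding same_def vflow_fst by simp
  hence "- T \<in> \<int>" by (simp add: Lat_iff)
  then obtain m where "- T = of_int m" by (metis Ints_cases)
  hence Tn: "T = of_int (-m)" by simp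
  define n where "n = -m"
  have n0: "n > 0" using T Tn unfolding n_def by simp
  have sh: "shift v (fst p) (fst p + \<i> * of_real T) = n * kap (Re v) (Re (fst p))"
  proof -
    have e: "fst p + \<i> * of_real T = fst p + of_int n * \<i>" using Tn unfolding n_def by simp
    show ?thesis unfolding e by (rule vert_int[OF assms])
  qed
  have "(snd p + n * kap (Re v) (Re (fst p))) mod int d = snd p mod int d"
    using T(2) unfolding same_def vflow_snd sh by simp
  hence "int d dvd n * kap (Re v) (Re (fst p))" by (metis mod_eq_dvd_iff add_diff_cancel_left')
  thus "\<exists>n::int. n > 0 \<and> T = of_int n \<and> int d dvd n * kap (Re v) (Re (fst p))"
    using n0 Tn unfolding n_def by blast
next
  assume "\<exists>n::int. n > 0 \<and> T = of_int n \<and> int d dvd n * kap (Re v) (Re (fst p))"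
  then obtain n::int where n: "n > 0" "T = of_int n" "int d dvd n * kap (Re v) (Re (fst p))" by blast
  have sh: "shift v (fst p) (fst p + \<i> * of_real T) = n * kap (Re v) (Re (fst p))"
  proof -
    have e: "fst p + \<i> * of_real T = fst p + of_int n * \<i>" using n by simp
    show ?thesis unfolding e by (rule vert_int[OF assms])
  qed
  have "same d (vflow v p T) p"
    unfolding same_def vflow_fst vflow_snd sh using n(2,3)
    by (auto simp: Lat_iff mod_eq_dvd_iff)
  moreover have "closed_segment (fst p) (fst p + \<i> * of_real T) \<inter> sing v = {}"
    using vseg_avoid assms by blast
  ultimately show "T \<in> vperiods v d p" unfolding vperiods_def using n by auto
qed

lemma regset_iff:
  assumes "d \<ge> 1"
  shows "p \<in> regset v d \<longleftrightarrow> regx (Re v) (Re (fst p))"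
proof
  assume r: "regx (Re v) (Re (fst p))"
  have "real d \<in> vperiods v d p"
    using vperiods_iff[OF r, of "real d" d] assms by (intro iffD2[OF vperiods_iff[OF r]]) 
      (rule exI[of _ "int d"], auto)
  thus "p \<in> regset v d" unfolding regset_def by blast
next
  assume "p \<in> regset v d"
  then obtain T where T: "T > 0" "closed_segment (fst p) (fst p + \<i> * of_real T) \<inter> sing v = {}"
    "same d (vflow v p T) p" unfolding regset_def vperiods_def by auto
  hence "fst p - (fst p + \<i> * of_real T) \<in> Lat" unfolding same_def vflow_fst by simp
  hence "- T \<in> \<int>" by (simp add: Lat_iff)
  then obtain m where hm: "- T = of_int m" by (metis Ints_cases)
  have "of_int m < (0::real)" using T(1) hm by linarith
  hence "m \<le> -1" by simp
  hence "of_int m \<le> (-1::real)" by simp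
  hence T1: "T \<ge> 1" using hm by linarith
  define z where "z = fst p"
  show "regx (Re v) (Re (fst p))"
  proof (rule ccontr)
    assume "\<not> regx (Re v) (Re (fst p))"
    hence "Re z \<in> \<int> \<or> Re z - Re v \<in> \<int>" unfolding regx_def z_def by blast
    then obtain w where w: "w \<in> sing v" "Re w = Re z" "Im z \<le> Im w" "Im w \<le> Im z + 1"
    proof
      assume h: "Re z \<in> \<int>"
      define w where "w = Complex (Re z) (of_int \<lceil>Im z\<rceil>)"
      have "w \<in> Lat" unfolding w_def using h by (simp add: Lat_iff)
      hence "w \<in> sing v" unfolding sing_def by blast
      moreover have "Im z \<le> Im w" "Im w \<le> Im z + 1" unfolding w_def complex.sel by linarith+
      ultimately show thesis using that[of w] unfolding w_def by simp
    next
      assume h: "Re z - Re v \<in> \<int>"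
      define w where "w = Complex (Re z) (Im v + of_int \<lceil>Im z - Im v\<rceil>)"
      have "w - v \<in> Lat" unfolding w_def using h by (simp add: Lat_iff)
      hence "w \<in> sing v" unfolding sing_def by blast
      moreover have "Im z \<le> Im w" "Im w \<le> Im z + 1" unfolding w_def complex.sel by linarith+
      ultimately show thesis using that[of w] unfolding w_def by simp
    qed
    have "w \<in> closed_segment z (z + \<i> * of_real T)"
      by (rule vseg_mem) (use w T1 in auto)
    thus False using w(1) T(2) unfolding z_def by blast
  qed
qed

lemma vperiod_eq:
  assumes "d \<ge> 1" "regx (Re v) (Re (fst p))"
  shows "vperiod v d p = real d / real_of_int (gcd (kap (Re v) (Re (fst p))) (int d))"
proof -
  define k where "k = kap (Re v) (Re (fst p))"
  define g where "g = gcd k (int d)"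
  define d' where "d' = int d div g"
  have g0: "g > 0" unfolding g_def using assms by simp
  have gd: "g dvd int d" "g dvd k" unfolding g_def by simp_all
  have dd: "int d = g * d'" unfolding d'_def using gd by simp
  have kk: "k = g * (k div g)" using gd by simp
  have cop: "coprime d' (k div g)" unfolding d'_def g_def using div_gcd_coprime[of "int d" k] assms
    by (simp add: gcd.commute)
  have "0 < g * d'" using dd assms by simp
  hence d'0: "d' > 0" using g0 zero_less_mult_pos by blast
  have mem: "real_of_int d' \<in> vperiods v d p"
  proof (rule iffD2[OF vperiods_iff[OF assms(2)]], intro exI conjI)
    show "d' > 0" by (rule d'0)
    show "real_of_int d' = real_of_int d'" by simp
    have "d' * k = int d * (k div g)" using dd kk by (metis mult.assoc mult.commute)
    thus "int d dvd d' * kap (Re v) (Re (fst p))" unfolding k_def[symmetric] by simp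
  qed
  have low: "real_of_int d' \<le> T" if hT: "T \<in> vperiods v d p" for T
  proof -
    obtain n::int where n: "n > 0" "T = of_int n" "int d dvd n * k"
      using iffD1[OF vperiods_iff[OF assms(2)] hT] unfolding k_def by blast
    have "g * d' dvd g * (n * (k div g))" using n(3) dd kk by (metis mult.left_commute)
    hence "d' dvd n * (k div g)" using g0 by simp
    hence "d' dvd n" using cop coprime_dvd_mult_left_iff by blast
    hence "d' \<le> n" using n(1) zdvd_imp_le by blast
    thus ?thesis using n by simp
  qed
  have "vperiod v d p = real_of_int d'"
    unfolding vperiod_def by (rule cInf_eq_minimum[OF mem low])
  also have "\<dots> = real d / real_of_int g" unfolding d'_def using of_int_div[OF gd(1)] by simp
  finally show ?thesis unfolding g_def k_def .
qed

lemma bezout_shift: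
  fixes k E M :: int and d :: nat
  assumes "d \<ge> 1" "gcd k (int d) dvd E"
  shows "\<exists>n. n \<ge> M \<and> int d dvd E + n * k"
proof -
  obtain u w where uw: "u * k + w * int d = gcd k (int d)" using bezout_int by blast
  obtain e where e: "E = gcd k (int d) * e" using assms(2) by (auto elim: dvdE)
  define c where "c = \<bar>M\<bar> + \<bar>e * u\<bar>"
  define n where "n = - (e * u) + c * int d"
  have c0: "c \<ge> 0" unfolding c_def by simp
  have "c * int d \<ge> c" using c0 assms(1) by (simp add: mult_le_cancel_left1)
  hence "n \<ge> M" unfolding n_def c_def by linarith
  moreover have "E + n * k = int d * (e * w + c * k)"
    unfolding n_def e uw[symmetric] by (simp add: algebra_simps)
  ultimately show ?thesis by (intro exI[of _ n]) simp
qed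

definition lab :: "complex \<Rightarrow> nat \<Rightarrow> pt \<Rightarrow> int \<times> int" where
  "lab v d p = (kap (Re v) (Re (fst p)), Phi v p mod gcd (kap (Re v) (Re (fst p))) (int d))"

lemma hflow_fst: "fst (hflow v p s) = fst p + of_real s" unfolding hflow_def by simp
lemma hflow_snd: "snd (hflow v p s) = snd p + shift v (fst p) (fst p + of_real s)" unfolding hflow_def by simp

lemma class_sub:
  assumes d1: "d \<ge> 1" and pr: "p \<in> regset v d" and pq: "(p, q) \<in> cyl_rel v d"
  shows "q \<in> regset v d \<and> lab v d q = lab v d p"
proof -
  obtain s t where st: "t \<ge> 0" "\<forall>r \<in> {min 0 s..max 0 s}. hflow v p r \<in> regset v d"
    "same d q (vflow v (hflow v p s) t)" and qr: "q \<in> regset v d"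
    using pq unfolding cyl_rel_def by blast
  define x where "x = Re (fst p)"
  have H: "regx (Re v) r" if "betw x (x + s) r" for r
  proof -
    have "r - x \<in> {min 0 s..max 0 s}" using that unfolding betw_def by (auto simp: min_def max_def)
    hence "hflow v p (r - x) \<in> regset v d" using st(2) by blast
    hence "regx (Re v) (Re (fst (hflow v p (r - x))))" using regset_iff[OF d1] by blast
    thus ?thesis unfolding hflow_fst x_def by simp
  qed
  have rx: "regx (Re v) x" using pr regset_iff[OF d1] unfolding x_def by blast
  have rxs: "regx (Re v) (x + s)" using H unfolding betw_def by auto
  define p1 where "p1 = hflow v p s"
  define p2 where "p2 = vflow v p1 t"
  have Re1: "Re (fst p1) = x + s" unfolding p1_def hflow_fst x_def by simp
  have Re2: "Re (fst p2) = x + s" unfolding p2_def vflow_fst using Re1 by simp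
  have k1: "kap (Re v) (x + s) = kap (Re v) x" using band_eq(2)[of x "x+s" "Re v"] H by auto
  have ph1: "Phi v p1 = Phi v p" unfolding p1_def by (rule phi_hflow) (use H in \<open>simp add: x_def\<close>)
  have ph2: "Phi v p2 = Phi v p1" unfolding p2_def by (rule phi_vflow) (use Re1 rxs in simp)
  have sq: "fst q - fst p2 \<in> Lat" "snd p2 mod int d = snd q mod int d"
  proof -
    have "fst p2 - fst q \<in> Lat" "snd q mod int d = snd p2 mod int d"
      using st(3) unfolding same_def p2_def p1_def by auto
    thus "fst q - fst p2 \<in> Lat" "snd p2 mod int d = snd q mod int d"
      using Lat_uminus[of "fst p2 - fst q"] by auto
  qed
  have gd: "gcd (kap (Re v) (Re (fst p2))) (int d) dvd (Phi v q - Phi v p2)"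
    by (rule phi_lat) (use sq Re2 rxs in auto)
  have kq: "kap (Re v) (Re (fst q)) = kap (Re v) x"
  proof -
    have "Re (fst q) - Re (fst p2) \<in> \<int>" using sq(1) by (simp add: Lat_iff)
    then obtain a where "Re (fst q) - Re (fst p2) = of_int a" by (metis Ints_cases)
    hence "Re (fst q) = (x + s) + of_int a" using Re2 by simp
    thus ?thesis using kap_int_shift k1 by simp
  qed
  have "gcd (kap (Re v) x) (int d) dvd (Phi v q - Phi v p)" using gd Re2 k1 ph1 ph2 by simp
  hence "Phi v q mod gcd (kap (Re v) x) (int d) = Phi v p mod gcd (kap (Re v) x) (int d)"
    by (simp add: mod_eq_dvd_iff)
  thus ?thesis using qr kq unfolding lab_def x_def by simp
qed

lemma same_band:
  assumes "regx th x" "regx th x'" "kap th x = kap th x'"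
  shows "\<And>r. betw x (x' - of_int (\<lfloor>x'\<rfloor> - \<lfloor>x\<rfloor>)) r \<Longrightarrow> regx th r"
proof -
  fix r assume b: "betw x (x' - of_int (\<lfloor>x'\<rfloor> - \<lfloor>x\<rfloor>)) r"
  define x'' where "x'' = x' - of_int (\<lfloor>x'\<rfloor> - \<lfloor>x\<rfloor>)"
  have e: "x'' = x' + of_int (- (\<lfloor>x'\<rfloor> - \<lfloor>x\<rfloor>))" unfolding x''_def by simp
  have r2: "regx th x''" unfolding e regx_int_shift by (rule assms(2))
  have fl: "\<lfloor>x''\<rfloor> = \<lfloor>x\<rfloor>" unfolding e by simp
  have fr: "frac x'' = frac x'" unfolding e by (rule frac_add_of_int_right)
  have "(frac x < frac th \<longleftrightarrow> frac x' < frac th)"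
    using kap_frac[OF assms(1)] kap_frac[OF assms(2)] assms(3) by (auto split: if_splits)
  hence "(frac x < frac th \<longleftrightarrow> frac x'' < frac th)" unfolding fr .
  thus "regx th r" using okb_intro[OF assms(1) r2 fl[symmetric]] b unfolding x''_def by blast
qed

lemma class_sup:
  assumes d1: "d \<ge> 1" and pr: "p \<in> regset v d" and qr: "q \<in> regset v d" and l: "lab v d q = lab v d p"
  shows "(p, q) \<in> cyl_rel v d"
proof -
  define z where "z = fst p"
  define z' where "z' = fst q"
  define x where "x = Re z"
  define x' where "x' = Re z'"
  have rx: "regx (Re v) x" using pr regset_iff[OF d1] unfolding x_def z_def by blast
  have rx': "regx (Re v) x'" using qr regset_iff[OF d1] unfolding x'_def z'_def by blast
  define k where "k = kap (Re v) x"
  have kk: "kap (Re v) x' = k" using l unfolding lab_def k_def x_def x'_def z_def z'_def by simp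
  define g where "g = gcd k (int d)"
  have gE: "g dvd (Phi v p - Phi v q)"
  proof -
    have l2: "kap (Re v) (Re (fst q)) = kap (Re v) (Re (fst p))"
      "Phi v q mod gcd (kap (Re v) (Re (fst q))) (int d) = Phi v p mod gcd (kap (Re v) (Re (fst p))) (int d)"
    proof -
      have "fst (lab v d q) = fst (lab v d p)" "snd (lab v d q) = snd (lab v d p)" using l by simp_all
      thus "kap (Re v) (Re (fst q)) = kap (Re v) (Re (fst p))"
      "Phi v q mod gcd (kap (Re v) (Re (fst q))) (int d) = Phi v p mod gcd (kap (Re v) (Re (fst p))) (int d)"
        unfolding lab_def fst_conv snd_conv by simp_all
    qed
    have "Phi v q mod g = Phi v p mod g" using l2(2) unfolding l2(1) g_def k_def x_def z_def .
    thus ?thesis by (metis mod_eq_dvd_iff)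
  qed
  define a where "a = \<lfloor>x'\<rfloor> - \<lfloor>x\<rfloor>"
  define x'' where "x'' = x' - of_int a"
  have B1: "regx (Re v) r" if "betw x x'' r" for r
  proof -
    have kk2: "kap (Re v) x = kap (Re v) x'" using kk unfolding k_def by simp
    show ?thesis using same_band[OF rx rx' kk2] that unfolding x''_def a_def by blast
  qed
  have rx'': "regx (Re v) x''" using B1 unfolding betw_def by auto
  have kx'': "kap (Re v) x'' = k"
  proof -
    have e: "x'' = x' + of_int (-a)" unfolding x''_def by simp
    show ?thesis unfolding e kap_int_shift by (rule kk)
  qed
  define s where "s = x'' - x"
  obtain n where n: "n \<ge> \<lceil>Im z - Im z'\<rceil>" "int d dvd (Phi v p - Phi v q) + n * k"
    using bezout_shift[OF d1, of k "Phi v p - Phi v q" "\<lceil>Im z - Im z'\<rceil>"] gE unfolding g_def by blast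
  define t where "t = Im z' - Im z + of_int n"
  have t0: "t \<ge> 0" unfolding t_def using n(1) by linarith
  define p1 where "p1 = hflow v p s"
  define p2 where "p2 = vflow v p1 t"
  define w where "w = z + of_real s"
  have fp1: "fst p1 = w" unfolding p1_def hflow_fst w_def z_def by simp
  have Rew: "Re w = x''" unfolding w_def s_def x_def by simp
  define u0 where "u0 = z' - of_int a"
  have fp2: "fst p2 = u0 + of_int n * \<i>"
    unfolding p2_def vflow_fst fp1 u0_def w_def t_def
    by (simp add: complex_eq_iff s_def x''_def x'_def x_def)
  have Reu0: "Re u0 = x''" unfolding u0_def x''_def x'_def by simp
  have ph: "Phi v p2 = Phi v p"
  proof -
    have "Phi v p2 = Phi v p1" unfolding p2_def by (rule phi_vflow) (simp add: fp1 Rew rx'')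
    also have "\<dots> = Phi v p" unfolding p1_def
      by (rule phi_hflow) (use B1 in \<open>simp add: x_def z_def s_def\<close>)
    finally show ?thesis .
  qed
  define c where "c = cb (Re v) x''"
  have cq: "cb (Re v) x' = c + of_int a"
  proof -
    have "x' = x'' + of_int a" unfolding x''_def by simp
    thus ?thesis unfolding c_def using cb_int_shift by metis
  qed
  have phq: "Phi v q = snd q + shift v u0 (of_real c)"
  proof -
    have e: "(of_real (cb (Re v) x') :: complex) = of_real c + of_int a" using cq by simp
    have "shift v z' (of_real (cb (Re v) x')) = shift v (u0 + of_int a) (of_real c + of_int a)"
      unfolding e u0_def by simp
    also have "\<dots> = shift v u0 (of_real c)" by (rule shift_translate) (simp add: Lat_iff)
    finally show ?thesis unfolding Phi_def z'_def[symmetric] x'_def[symmetric] by simp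
  qed
  have ph2: "Phi v p2 = snd p2 - n * k + shift v u0 (of_real c)"
  proof -
    have "shift v (u0 + of_int n * \<i>) (of_real c) = shift v (u0 + of_int n * \<i>) u0 + shift v u0 (of_real c)"
      by (rule shift_add3[of v c]) (use okb_cb okb_cb_self rx'' Reu0 in \<open>auto simp: c_def\<close>)
    moreover have "shift v (u0 + of_int n * \<i>) u0 = - n * k"
    proof -
      have "shift v (u0 + of_int n * \<i>) ((u0 + of_int n * \<i>) + of_int (-n) * \<i>) = (-n) * kap (Re v) (Re (u0 + of_int n * \<i>))"
        by (rule vert_int) (use rx'' Reu0 in simp)
      thus ?thesis using Reu0 kx'' by simp
    qed
    moreover have "Re (fst p2) = x''" using fp2 Reu0 by simp
    ultimately show ?thesis unfolding Phi_def fp2 c_def by simp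
  qed
  have "snd p2 - snd q = (Phi v p - Phi v q) + n * k" using ph ph2 phq by simp
  hence "int d dvd snd p2 - snd q" using n(2) by simp
  hence sm: "snd q mod int d = snd p2 mod int d" by (metis mod_eq_dvd_iff)
  have lat: "fst p2 - fst q \<in> Lat"
  proof -
    have "fst p2 - fst q = of_int (-a) + of_int n * \<i>" unfolding fp2 u0_def z'_def by simp
    thus ?thesis by (simp add: Lat_iff)
  qed
  have same: "same d q (vflow v (hflow v p s) t)"
    using sm lat unfolding same_def p2_def p1_def by simp
  have seg1: "closed_segment (fst p) (fst p + of_real s) \<inter> sing v = {}"
    by (rule seg_avoid) (use B1 in \<open>simp add: x_def z_def s_def\<close>)
  have hreg: "\<forall>r \<in> {min 0 s..max 0 s}. hflow v p r \<in> regset v d"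
  proof
    fix r assume "r \<in> {min 0 s..max 0 s}"
    hence "betw x x'' (x + r)" unfolding betw_def s_def by (auto simp: min_def max_def split: if_splits)
    hence "regx (Re v) (x + r)" by (rule B1)
    hence "regx (Re v) (Re (fst (hflow v p r)))" unfolding hflow_fst x_def z_def by simp
    thus "hflow v p r \<in> regset v d" using regset_iff[OF d1] by blast
  qed
  have seg2: "closed_segment (fst (hflow v p s)) (fst (hflow v p s) + \<i> * of_real t) \<inter> sing v = {}"
    using vseg_avoid[of v "fst (hflow v p s)" t] rx'' fp1 Rew unfolding p1_def by simp
  show ?thesis unfolding cyl_rel_def using pr qr t0 seg1 hreg seg2 same by blast
qed

definition Cl :: "complex \<Rightarrow> nat \<Rightarrow> int \<times> int \<Rightarrow> pt set" where
  "Cl v d lam = {q \<in> regset v d. lab v d q = lam}"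

lemma class_eq:
  assumes "d \<ge> 1" "p \<in> regset v d"
  shows "cyl_rel v d `` {p} = Cl v d (lab v d p)"
  unfolding Cl_def using class_sub[OF assms] class_sup[OF assms(1,2)] by blast

lemma cyl_image:
  assumes "d \<ge> 1"
  shows "cylinders v d = Cl v d ` (lab v d ` regset v d)"
proof -
  have "cylinders v d = (\<lambda>p. cyl_rel v d `` {p}) ` regset v d"
    unfolding cylinders_def quotient_def by blast
  also have "\<dots> = (\<lambda>p. Cl v d (lab v d p)) ` regset v d" using class_eq[OF assms] by simp
  finally show ?thesis by (simp add: image_image)
qed

lemma Cl_inj: "inj_on (Cl v d) (lab v d ` regset v d)"
proof (rule inj_onI)
  fix a b assume "a \<in> lab v d ` regset v d" "b \<in> lab v d ` regset v d" "Cl v d a = Cl v d b"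
  then obtain p where p: "p \<in> regset v d" "lab v d p = a" by blast
  hence "p \<in> Cl v d a" unfolding Cl_def by simp
  hence "p \<in> Cl v d b" using \<open>Cl v d a = Cl v d b\<close> by simp
  thus "a = b" using p unfolding Cl_def by simp
qed

lemma lab_image:
  assumes d1: "d \<ge> 1"
  shows "lab v d ` regset v d = {(k, r). k \<in> kap (Re v) ` {x. regx (Re v) x} \<and> 0 \<le> r \<and> r < gcd k (int d)}"
proof
  show "lab v d ` regset v d \<subseteq> {(k, r). k \<in> kap (Re v) ` {x. regx (Re v) x} \<and> 0 \<le> r \<and> r < gcd k (int d)}"
  proof
    fix lam assume "lam \<in> lab v d ` regset v d"
    then obtain p where p: "p \<in> regset v d" "lam = lab v d p" by blast
    have r: "regx (Re v) (Re (fst p))" using p regset_iff[OF d1] by blast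
    have g: "gcd (kap (Re v) (Re (fst p))) (int d) > 0" using d1 by simp
    show "lam \<in> {(k, r). k \<in> kap (Re v) ` {x. regx (Re v) x} \<and> 0 \<le> r \<and> r < gcd k (int d)}"
      unfolding p lab_def using r g by auto
  qed
next
  show "{(k, r). k \<in> kap (Re v) ` {x. regx (Re v) x} \<and> 0 \<le> r \<and> r < gcd k (int d)} \<subseteq> lab v d ` regset v d"
  proof
    fix lam assume "lam \<in> {(k, r). k \<in> kap (Re v) ` {x. regx (Re v) x} \<and> 0 \<le> r \<and> r < gcd k (int d)}"
    then obtain x r where lr: "lam = (kap (Re v) x, r)" "regx (Re v) x" "0 \<le> r" "r < gcd (kap (Re v) x) (int d)"
      by blast
    define p where "p = (complex_of_real x, r - shift v (of_real x) (of_real (cb (Re v) x)))"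
    have pr: "p \<in> regset v d" using regset_iff[OF d1] lr(2) unfolding p_def by simp
    have "Phi v p = r" unfolding Phi_def p_def by simp
    hence "lab v d p = lam" unfolding lab_def lr(1) using lr(3,4) unfolding p_def by simp
    thus "lam \<in> lab v d ` regset v d" using pr by blast
  qed
qed

lemma width_Cl:
  assumes d1: "d \<ge> 1" and lam: "lam \<in> lab v d ` regset v d"
  shows "cyl_width v d (Cl v d lam) = real d / real_of_int (gcd (fst lam) (int d))"
proof -
  have "\<exists>p. p \<in> Cl v d lam" using lam unfolding Cl_def by blast
  hence sp: "(SOME p. p \<in> Cl v d lam) \<in> Cl v d lam" by (rule someI_ex)
  define p where "p = (SOME p. p \<in> Cl v d lam)"
  have p: "p \<in> regset v d" "lab v d p = lam" using sp unfolding p_def Cl_def by auto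
  have r: "regx (Re v) (Re (fst p))" using p regset_iff[OF d1] by blast
  have "fst lam = kap (Re v) (Re (fst p))" using p(2) unfolding lab_def by auto
  thus ?thesis unfolding cyl_width_def p_def[symmetric] using vperiod_eq[OF d1 r] by simp
qed

lemma gcd_mod_same:
  fixes k m :: int
  assumes "k mod int d = m mod int d"
  shows "gcd k (int d) = gcd m (int d)"
  using gcd_red_int[of k "int d"] gcd_red_int[of m "int d"] assms by simp

lemma kap_image_open:
  assumes "th \<notin> \<int>"
  shows "kap th ` {x. regx th x} = {\<lfloor>th\<rfloor>, \<lfloor>th\<rfloor> + 1}"
proof
  show "kap th ` {x. regx th x} \<subseteq> {\<lfloor>th\<rfloor>, \<lfloor>th\<rfloor> + 1}"
  proof
    fix k assume "k \<in> kap th ` {x. regx th x}"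
    then obtain x where "regx th x" "k = kap th x" by blast
    thus "k \<in> {\<lfloor>th\<rfloor>, \<lfloor>th\<rfloor> + 1}" using kap_frac[of th x] by (cases "frac x < frac th") auto
  qed
next
  have ft: "0 < frac th" "frac th < 1" using assms frac_lt_1 by auto
  have ft0: "0 \<le> frac th" by simp
  define x1 where "x1 = 1/2 + frac th / 2"
  define x2 where "x2 = frac th / 2"
  have x1: "0 < x1" "x1 < 1" "x1 > frac th" unfolding x1_def using ft ft0 by linarith+
  have x2: "0 < x2" "x2 < 1" "x2 < frac th" unfolding x2_def using ft by auto
  have f1: "frac x1 = x1" using x1 by (intro frac_eq_id) auto
  have f2: "frac x2 = x2" using x2 by (intro frac_eq_id) auto
  have r1: "regx th x1" unfolding regx_frac f1 using x1 by auto
  have r2: "regx th x2" unfolding regx_frac f2 using x2 by auto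
  have "kap th x1 = \<lfloor>th\<rfloor>" using kap_frac[OF r1] f1 x1 by simp
  hence a: "\<lfloor>th\<rfloor> \<in> kap th ` {x. regx th x}" using r1 by (intro rev_image_eqI[of x1]) auto
  have "kap th x2 = \<lfloor>th\<rfloor> + 1" using kap_frac[OF r2] f2 x2 by simp
  hence b: "\<lfloor>th\<rfloor> + 1 \<in> kap th ` {x. regx th x}" using r2 by (intro rev_image_eqI[of x2]) auto
  show "{\<lfloor>th\<rfloor>, \<lfloor>th\<rfloor> + 1} \<subseteq> kap th ` {x. regx th x}" using a b by simp
qed

lemma kap_image_int:
  assumes "th \<in> \<int>"
  shows "kap th ` {x. regx th x} = {\<lfloor>th\<rfloor>}"
proof
  have "frac th = 0" using assms by simp
  show "kap th ` {x. regx th x} \<subseteq> {\<lfloor>th\<rfloor>}"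
  proof
    fix k assume "k \<in> kap th ` {x. regx th x}"
    then obtain x where "regx th x" "k = kap th x" by blast
    moreover have "\<not> frac x < frac th" using \<open>frac th = 0\<close> frac_ge_0[of x] by linarith
    ultimately show "k \<in> {\<lfloor>th\<rfloor>}" using kap_frac[of th x] by auto
  qed
next
  have f: "frac (1/2 :: real) = 1/2" by (intro frac_eq_id) auto
  have ft: "frac th = 0" using assms by simp
  have r: "regx th (1/2)" unfolding regx_frac f ft by simp
  have "kap th (1/2) = \<lfloor>th\<rfloor>" using kap_frac[OF r] f ft by simp
  hence "\<lfloor>th\<rfloor> \<in> kap th ` {x. regx th x}" using r by (intro rev_image_eqI[of "1/2"]) auto
  thus "{\<lfloor>th\<rfloor>} \<subseteq> kap th ` {x. regx th x}" by simp
qed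

definition LL :: "nat \<Rightarrow> int \<Rightarrow> (int \<times> int) set" where
  "LL d k = {(k', r). k' = k \<and> 0 \<le> r \<and> r < gcd k (int d)}"

lemma card_LL: "card (LL d k) = nat (gcd k (int d))"
proof -
  have "LL d k = Pair k ` {0..<gcd k (int d)}" unfolding LL_def by auto
  moreover have "inj_on (Pair k) {0..<gcd k (int d)}" by (auto simp: inj_on_def)
  ultimately show ?thesis by (simp add: card_image)
qed

lemma lab_image_open:
  assumes "d \<ge> 1" "Re v \<notin> \<int>"
  shows "lab v d ` regset v d = LL d \<lfloor>Re v\<rfloor> \<union> LL d (\<lfloor>Re v\<rfloor> + 1)"
  unfolding lab_image[OF assms(1)] kap_image_open[OF assms(2)] LL_def by auto

lemma lab_image_int:
  assumes "d \<ge> 1" "Re v \<in> \<int>"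
  shows "lab v d ` regset v d = LL d \<lfloor>Re v\<rfloor>"
  unfolding lab_image[OF assms(1)] kap_image_int[OF assms(2)] LL_def by auto

lemma fst_LL: "lam \<in> LL d k \<Longrightarrow> fst lam = k" unfolding LL_def by auto

lemma part_open:
  fixes d i :: nat and th tv :: real
  assumes "d \<ge> 2" and "i < d" and h: "in_open_cyl d i th"
  shows "\<exists>A B. cylinders (Complex th tv) d = A \<union> B \<and> A \<inter> B = {} \<and>
               card A = gcd i d \<and> card B = gcd (i + 1) d \<and>
               (\<forall>C\<in>A. cyl_width (Complex th tv) d C = real d / real (gcd i d)) \<and>
               (\<forall>C\<in>B. cyl_width (Complex th tv) d C = real d / real (gcd (i + 1) d))"
proof -
  define v where "v = Complex th tv"
  have Rv: "Re v = th" unfolding v_def by simp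
  have d1: "d \<ge> 1" using assms by simp
    have fm: "\<lfloor>th\<rfloor> mod int d = int i" and ni: "th \<notin> \<int>" using h unfolding in_open_cyl_def by auto
    define k0 where "k0 = \<lfloor>th\<rfloor>"
    have g0: "gcd k0 (int d) = int (gcd i d)"
    proof -
      have "k0 mod int d = int i mod int d" using fm assms(2) unfolding k0_def by simp
      hence "gcd k0 (int d) = gcd (int i) (int d)" by (rule gcd_mod_same)
      thus ?thesis by simp
    qed
    have g1: "gcd (k0 + 1) (int d) = int (gcd (i + 1) d)"
    proof -
      have "(k0 + 1) mod int d = (int i + 1) mod int d" using fm unfolding k0_def by (metis mod_add_left_eq)
      hence "gcd (k0 + 1) (int d) = gcd (int i + 1) (int d)" by (rule gcd_mod_same)
      thus ?thesis by (metis of_nat_Suc gcd_int_int_eq add.commute plus_1_eq_Suc)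
    qed
    define LS where "LS = lab v d ` regset v d"
    have LS: "LS = LL d k0 \<union> LL d (k0 + 1)" unfolding LS_def k0_def
      using lab_image_open[OF d1, of v] ni Rv by simp
    define A where "A = Cl v d ` LL d k0"
    define B where "B = Cl v d ` LL d (k0 + 1)"
    have inj: "inj_on (Cl v d) LS" unfolding LS_def by (rule Cl_inj)
    have cyl: "cylinders v d = A \<union> B" unfolding A_def B_def cyl_image[OF d1] LS_def[symmetric] LS
      by (rule image_Un)
    have dis: "LL d k0 \<inter> LL d (k0 + 1) = {}" unfolding LL_def by auto
    have AB: "A \<inter> B = {}" unfolding A_def B_def
      using inj_on_image_Int[OF inj, of "LL d k0" "LL d (k0+1)"] dis LS by simp
    have cA: "card A = gcd i d" unfolding A_def
      using card_image[OF inj_on_subset[OF inj, of "LL d k0"]] LS card_LL g0 by simp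
    have cB: "card B = gcd (i + 1) d" unfolding B_def
      using card_image[OF inj_on_subset[OF inj, of "LL d (k0+1)"]] LS card_LL g1 by simp
    have wA: "\<forall>C\<in>A. cyl_width v d C = real d / real (gcd i d)"
    proof
      fix C assume "C \<in> A"
      then obtain lam where lam: "lam \<in> LL d k0" "C = Cl v d lam" unfolding A_def by blast
      have "lam \<in> lab v d ` regset v d" using lam LS unfolding LS_def by blast
      thus "cyl_width v d C = real d / real (gcd i d)"
        using width_Cl[OF d1] lam fst_LL[OF lam(1)] g0 by simp
    qed
    have wB: "\<forall>C\<in>B. cyl_width v d C = real d / real (gcd (i + 1) d)"
    proof
      fix C assume "C \<in> B"
      then obtain lam where lam: "lam \<in> LL d (k0+1)" "C = Cl v d lam" unfolding B_def by blast
      have "lam \<in> lab v d ` regset v d" using lam LS unfolding LS_def by blast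
      thus "cyl_width v d C = real d / real (gcd (i + 1) d)"
        using width_Cl[OF d1] lam fst_LL[OF lam(1)] g1 by simp
    qed
    show "\<exists>A B. cylinders (Complex th tv) d = A \<union> B \<and> A \<inter> B = {} \<and>
               card A = gcd i d \<and> card B = gcd (i + 1) d \<and>
               (\<forall>C\<in>A. cyl_width (Complex th tv) d C = real d / real (gcd i d)) \<and>
               (\<forall>C\<in>B. cyl_width (Complex th tv) d C = real d / real (gcd (i + 1) d))"
      using cyl AB cA cB wA wB unfolding v_def by blast
qed

lemma part_boundary:
  fixes d i :: nat and th tv :: real
  assumes "d \<ge> 2" and "i < d" and h: "on_boundary_leaf d i th"
  shows "card (cylinders (Complex th tv) d) = gcd i d \<and>
            (\<forall>C\<in>cylinders (Complex th tv) d.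
               cyl_width (Complex th tv) d C = real d / real (gcd i d))"
proof -
  define v where "v = Complex th tv"
  have Rv: "Re v = th" unfolding v_def by simp
  have d1: "d \<ge> 1" using assms by simp
    obtain k :: int where k: "th = real i + of_int k * real d" using h unfolding on_boundary_leaf_def by blast
    define k0 where "k0 = int i + k * int d"
    have thk: "th = of_int k0" unfolding k0_def k by simp
    have ti: "th \<in> \<int>" unfolding thk by simp
    have fl: "\<lfloor>th\<rfloor> = k0" unfolding thk by simp
    have g0: "gcd k0 (int d) = int (gcd i d)"
    proof -
      have "k0 mod int d = int i mod int d" unfolding k0_def by simp
      hence "gcd k0 (int d) = gcd (int i) (int d)" by (rule gcd_mod_same)
      thus ?thesis by simp
    qed
    define LS where "LS = lab v d ` regset v d"
    have LS: "LS = LL d k0" unfolding LS_def using lab_image_int[OF d1, of v] ti Rv fl by simp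
    have inj: "inj_on (Cl v d) LS" unfolding LS_def by (rule Cl_inj)
    have cyl: "cylinders v d = Cl v d ` LS" unfolding cyl_image[OF d1] LS_def by simp
    have "card (cylinders v d) = gcd i d" unfolding cyl using card_image[OF inj] LS card_LL g0 by simp
    moreover have "\<forall>C\<in>cylinders v d. cyl_width v d C = real d / real (gcd i d)"
    proof
      fix C assume "C \<in> cylinders v d"
      then obtain lam where lam: "lam \<in> LL d k0" "C = Cl v d lam" unfolding cyl LS by blast
      have "lam \<in> lab v d ` regset v d" using lam LS unfolding LS_def by blast
      thus "cyl_width v d C = real d / real (gcd i d)"
        using width_Cl[OF d1] lam fst_LL[OF lam(1)] g0 by simp
    qed
    ultimately show "card (cylinders (Complex th tv) d) = gcd i d \<and>
            (\<forall>C\<in>cylinders (Complex th tv) d.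
               cyl_width (Complex th tv) d C = real d / real (gcd i d))" unfolding v_def by blast
qed

theorem mainTheorem9:
  fixes d i :: nat and th tv :: real
  assumes "d \<ge> 2" and "i < d"
  shows "(in_open_cyl d i th \<longrightarrow>
            (\<exists>A B. cylinders (Complex th tv) d = A \<union> B \<and> A \<inter> B = {} \<and>
               card A = gcd i d \<and> card B = gcd (i + 1) d \<and>
               (\<forall>C\<in>A. cyl_width (Complex th tv) d C = real d / real (gcd i d)) \<and>
               (\<forall>C\<in>B. cyl_width (Complex th tv) d C = real d / real (gcd (i + 1) d))))
       \<and> (on_boundary_leaf d i th \<longrightarrow>
            card (cylinders (Complex th tv) d) = gcd i d \<and>
            (\<forall>C\<in>cylinders (Complex th tv) d.
               cyl_width (Complex th tv) d C = real d / real (gcd i d)))"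
  using part_open[OF assms] part_boundary[OF assms] by blast


end
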